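(* For every group $G$, $S(G) = \bigcap_{N \lhd G,\ |G:N|<\infty} F_N(G)$.
   Context: $S(G) := \{ x \in G : x^{|G:H|} \in H \text{ for every subgroup } H \leqslant G \text{ of finite index}\}$. For a group $X$, the Fitting subgroup $F(X)$ is the subgroup generated by all nilpotent normal subgroups of $X$. For $N \lhd G$, $F_N(G)$ denotes the preimage of $F(G/N)$ under the projection $G \to G/N$. *)

theory Defs
  imports "HOL-Algebra.Algebra"
begin

definition comm_subgroup :: "('a, 'b) monoid_scheme \<Rightarrow> 'a set \<Rightarrow> 'a set \<Rightarrow> 'a set" where
  "comm_subgroup G A B = generate G
     {a \<otimes>\<^bsub>G\<^esub> b \<otimes>\<^bsub>G\<^esub> inv\<^bsub>G\<^esub> a \<otimes>\<^bsub>G\<^esub> inv\<^bsub>G\<^esub> b | a b. a \<in> A \<and> b \<in> B}"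

text \<open>Lower central series: gamma_1 = G (index 0), gamma_(i+1) = [gamma_i, G].\<close>
fun lower_central :: "('a, 'b) monoid_scheme \<Rightarrow> nat \<Rightarrow> 'a set" where
  "lower_central G 0 = carrier G"
| "lower_central G (Suc n) = comm_subgroup G (lower_central G n) (carrier G)"

definition nilpotent_group :: "('a, 'b) monoid_scheme \<Rightarrow> bool" where
  "nilpotent_group G \<longleftrightarrow> group G \<and> (\<exists>n. lower_central G n = {\<one>\<^bsub>G\<^esub>})"

definition fitting :: "('a, 'b) monoid_scheme \<Rightarrow> 'a set" where
  "fitting Y = generate Y (\<Union>{K. normal K Y \<and> nilpotent_group (Y\<lparr>carrier := K\<rparr>)})"

definition fitting_rel :: "('a, 'b) monoid_scheme \<Rightarrow> 'a set \<Rightarrow> 'a set" where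
  "fitting_rel G N = {x \<in> carrier G. N #>\<^bsub>G\<^esub> x \<in> fitting (G Mod N)}"

text \<open>S(G).  A subgroup H has finite index iff rcosets H is finite; the index is its card.\<close>
definition S_set :: "('a, 'b) monoid_scheme \<Rightarrow> 'a set" where
  "S_set G = {x \<in> carrier G. \<forall>H. subgroup H G \<and> finite (rcosets\<^bsub>G\<^esub> H)
        \<longrightarrow> x [^]\<^bsub>G\<^esub> card (rcosets\<^bsub>G\<^esub> H) \<in> H}"

end

theory Submission
  imports Defs "HOL-Algebra.Multiplicative_Group" "HOL-Algebra.SndIsomorphismGrp"
begin

fun lcs :: "('a, 'b) monoid_scheme \<Rightarrow> 'a set \<Rightarrow> nat \<Rightarrow> 'a set" where
  "lcs G K 0 = K"
| "lcs G K (Suc n) = comm_subgroup G (lcs G K n) K"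

context group begin

lemma comm_in_carrier:
  assumes "A \<subseteq> carrier G" "B \<subseteq> carrier G"
  shows "{a \<otimes> b \<otimes> inv a \<otimes> inv b | a b. a \<in> A \<and> b \<in> B} \<subseteq> carrier G"
  using assms by blast

lemma lcs_sub:
  assumes "subgroup K G"
  shows "subgroup (lcs G K n) G \<and> lcs G K n \<subseteq> K"
proof (induction n)
  case 0 then show ?case using assms by simp
next
  case (Suc n)
  have K: "K \<subseteq> carrier G" using assms subgroup.subset by blast
  have sub: "{a \<otimes> b \<otimes> inv a \<otimes> inv b | a b. a \<in> lcs G K n \<and> b \<in> K} \<subseteq> K"
    using Suc assms by (auto intro!: subgroup.m_closed subgroup.m_inv_closed)
  show ?case
    unfolding lcs.simps comm_subgroup_def
    using generate_is_subgroup[OF subset_trans[OF sub K]] generate_subgroup_incl[OF sub assms]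
    by blast
qed

lemma lower_central_sub:
  assumes "subgroup K G"
  shows "lower_central (G\<lparr>carrier := K\<rparr>) n = lcs G K n"
proof (induction n)
  case 0 then show ?case by simp
next
  case (Suc n)
  have L: "lcs G K n \<subseteq> K" using lcs_sub[OF assms] by blast
  have eq: "{a \<otimes>\<^bsub>G\<lparr>carrier := K\<rparr>\<^esub> b \<otimes>\<^bsub>G\<lparr>carrier := K\<rparr>\<^esub> inv\<^bsub>G\<lparr>carrier := K\<rparr>\<^esub> a \<otimes>\<^bsub>G\<lparr>carrier := K\<rparr>\<^esub> inv\<^bsub>G\<lparr>carrier := K\<rparr>\<^esub> b | a b.
      a \<in> lcs G K n \<and> b \<in> carrier (G\<lparr>carrier := K\<rparr>)}
    = {a \<otimes> b \<otimes> inv a \<otimes> inv b | a b. a \<in> lcs G K n \<and> b \<in> K}"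
    using L assms by force
  have sub: "{a \<otimes> b \<otimes> inv a \<otimes> inv b | a b. a \<in> lcs G K n \<and> b \<in> K} \<subseteq> K"
    using lcs_sub[OF assms, of n] assms by (auto intro!: subgroup.m_closed subgroup.m_inv_closed)
  show ?case
    unfolding lower_central.simps lcs.simps comm_subgroup_def Suc eq
    using generate_consistent[OF sub assms] by simp
qed

lemma nilpotent_sub_iff:
  assumes "subgroup K G"
  shows "nilpotent_group (G\<lparr>carrier := K\<rparr>) \<longleftrightarrow> (\<exists>n. lcs G K n = {\<one>})"
  unfolding nilpotent_group_def using subgroup_imp_group[OF assms] lower_central_sub[OF assms]
  by simp

end

lemma (in group_action) orbit_eq:
  assumes "x \<in> E" "y \<in> orbit G \<phi> x"
  shows "orbit G \<phi> y = orbit G \<phi> x"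
proof -
  have yE: "y \<in> E" using assms element_image unfolding orbit_def by blast
  have oE: "\<And>z w. z \<in> E \<Longrightarrow> w \<in> orbit G \<phi> z \<Longrightarrow> w \<in> E"
    using element_image unfolding orbit_def by blast
  show ?thesis
  proof
    show "orbit G \<phi> y \<subseteq> orbit G \<phi> x"
      using orbit_trans[OF assms(1) yE] assms oE yE by blast
    show "orbit G \<phi> x \<subseteq> orbit G \<phi> y"
      using orbit_trans[OF yE assms(1)] orbit_sym[OF assms(1) yE assms(2)] assms oE by blast
  qed
qed

lemma (in group_action) fixed_points_mod:
  assumes fin: "finite XX" and XE: "XX \<subseteq> E"
    and inv: "\<And>g C. g \<in> carrier G \<Longrightarrow> C \<in> XX \<Longrightarrow> \<phi> g C \<in> XX"
    and p: "Factorial_Ring.prime (p::nat)" and ord: "order G = p ^ k"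
  shows "p dvd card (XX - {C \<in> XX. \<forall>g\<in>carrier G. \<phi> g C = C})"
proof -
  interpret grp: group G using group_hom group_hom.axioms(1) by auto
  define F where "F = {C \<in> XX. \<forall>g\<in>carrier G. \<phi> g C = C}"
  have orbX: "orbit G \<phi> C \<subseteq> XX" if "C \<in> XX" for C
    using inv that unfolding orbit_def by blast
  have orbNF: "orbit G \<phi> C \<subseteq> XX - F" if C: "C \<in> XX - F" for C
  proof
    fix D assume D: "D \<in> orbit G \<phi> C"
    have CE: "C \<in> E" using C XE by blast
    show "D \<in> XX - F"
    proof
      show "D \<in> XX" using orbX C D by blast
      show "D \<notin> F"
      proof
        assume "D \<in> F"
        then have "orbit G \<phi> D = {D}" unfolding orbit_def F_def using grp.one_closed by force
        moreover have "orbit G \<phi> D = orbit G \<phi> C" using orbit_eq[OF CE D] .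
        ultimately have "C = D" using orbit_refl[OF CE] by blast
        with C \<open>D \<in> F\<close> show False by blast
      qed
    qed
  qed
  have pdvd: "p dvd card (orbit G \<phi> C)" if C: "C \<in> XX - F" for C
  proof -
    have CE: "C \<in> E" using C XE by blast
    have "card (orbit G \<phi> C) dvd p ^ k"
      using orbit_stabilizer_theorem[OF CE] ord by (metis dvd_triv_left)
    then obtain j where j: "j \<le> k" "card (orbit G \<phi> C) = p ^ j"
      using p by (auto simp: divides_primepow_nat)
    show ?thesis
    proof (cases j)
      case 0
      then have "card (orbit G \<phi> C) = 1" using j by simp
      then obtain D where "orbit G \<phi> C = {D}" by (auto simp: card_Suc_eq)
      then have "orbit G \<phi> C = {C}" using orbit_refl[OF CE] by auto
      then have "C \<in> F" using C unfolding F_def orbit_def by blast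
      with C show ?thesis by blast
    next
      case (Suc j') then show ?thesis using j by simp
    qed
  qed
  have cover: "XX - F = \<Union> (orbit G \<phi> ` (XX - F))"
    using orbNF orbit_refl XE by blast
  have disj: "pairwise disjnt (orbit G \<phi> ` (XX - F))"
  proof (rule pairwiseI)
    fix A B assume A: "A \<in> orbit G \<phi> ` (XX - F)" and B: "B \<in> orbit G \<phi> ` (XX - F)" and ne: "A \<noteq> B"
    obtain C1 where C1: "C1 \<in> XX - F" "A = orbit G \<phi> C1" using A by blast
    obtain C2 where C2: "C2 \<in> XX - F" "B = orbit G \<phi> C2" using B by blast
    show "disjnt A B"
    proof (rule ccontr)
      assume "\<not> disjnt A B"
      then obtain D where D: "D \<in> A" "D \<in> B" unfolding disjnt_def by blast
      have "orbit G \<phi> D = A" using orbit_eq[of C1 D] C1 D XE by blast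
      moreover have "orbit G \<phi> D = B" using orbit_eq[of C2 D] C2 D XE by blast
      ultimately show False using ne by simp
    qed
  qed
  have finorb: "\<forall>A \<in> orbit G \<phi> ` (XX - F). finite A"
    using orbNF fin by (metis (no_types, lifting) finite_Diff finite_subset imageE)
  have "card (XX - F) = card (\<Union> (orbit G \<phi> ` (XX - F)))" using cover by simp
  also have "\<dots> = sum card (orbit G \<phi> ` (XX - F))"
    using card_Union_disjoint[OF disj] finorb by blast
  finally have "card (XX - F) = sum card (orbit G \<phi> ` (XX - F))" .
  moreover have "p dvd sum card (orbit G \<phi> ` (XX - F))"
    by (rule dvd_sum) (use pdvd in blast)
  ultimately show ?thesis unfolding F_def by simp
qed


fun ucs :: "('a, 'b) monoid_scheme \<Rightarrow> 'a set \<Rightarrow> nat \<Rightarrow> 'a set" where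
  "ucs G P 0 = {\<one>\<^bsub>G\<^esub>}"
| "ucs G P (Suc n) = {x \<in> P. \<forall>g\<in>P. x \<otimes>\<^bsub>G\<^esub> g \<otimes>\<^bsub>G\<^esub> inv\<^bsub>G\<^esub> x \<otimes>\<^bsub>G\<^esub> inv\<^bsub>G\<^esub> g \<in> ucs G P n}"

context group begin

lemma cancel1 [simp]: "x \<in> carrier G \<Longrightarrow> y \<in> carrier G \<Longrightarrow> x \<otimes> (inv x \<otimes> y) = y"
  by (simp add: m_assoc[symmetric])
lemma cancel2 [simp]: "x \<in> carrier G \<Longrightarrow> y \<in> carrier G \<Longrightarrow> inv x \<otimes> (x \<otimes> y) = y"
  by (simp add: m_assoc[symmetric])

lemma rcos_eq_iff:
  assumes "subgroup H G" "a \<in> carrier G" "b \<in> carrier G"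
  shows "H #> a = H #> b \<longleftrightarrow> a \<otimes> inv b \<in> H"
proof
  assume "H #> a = H #> b"
  then have "a \<in> H #> b" using rcos_self[OF assms(2,1)] by simp
  then show "a \<otimes> inv b \<in> H" using subgroup.rcos_module_imp[OF assms(1) is_group assms(3)] by blast
next
  assume "a \<otimes> inv b \<in> H"
  then have "a \<in> H #> b" using subgroup.rcos_module_rev[OF assms(1) is_group assms(3,2)] by blast
  then show "H #> a = H #> b" using repr_independence[OF _ assms(3,1)] by simp
qed

definition nsub :: "'a set \<Rightarrow> 'a set \<Rightarrow> bool" where
  "nsub Z P \<longleftrightarrow> subgroup Z G \<and> Z \<subseteq> P \<and> (\<forall>g\<in>P. \<forall>z\<in>Z. g \<otimes> z \<otimes> inv g \<in> Z)"

lemma ucs_props: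
  assumes P: "subgroup P G"
  shows "nsub (ucs G P n) P"
proof (induction n)
  case 0
  show ?case unfolding nsub_def using P subgroup.mem_carrier[OF P] subgroup.one_closed[OF P] by (auto intro: triv_subgroup)
next
  case (Suc n)
  define Z where "Z = ucs G P n"
  have Zs: "subgroup Z G" "Z \<subseteq> P" and Zn: "\<And>g z. g \<in> P \<Longrightarrow> z \<in> Z \<Longrightarrow> g \<otimes> z \<otimes> inv g \<in> Z"
    using Suc unfolding nsub_def Z_def by auto
  have PG: "P \<subseteq> carrier G" using subgroup.subset[OF P] .
  have ZG: "Z \<subseteq> carrier G" using Zs PG by blast
  have S: "ucs G P (Suc n) = {x \<in> P. \<forall>g\<in>P. x \<otimes> g \<otimes> inv x \<otimes> inv g \<in> Z}" unfolding Z_def by (simp only: ucs.simps)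
  have sub: "subgroup (ucs G P (Suc n)) G"
  proof (rule subgroupI)
    show "ucs G P (Suc n) \<subseteq> carrier G" using S PG by blast
    show "ucs G P (Suc n) \<noteq> {}"
    proof -
      have "\<one> \<in> P" using subgroup.one_closed[OF P] .
      moreover have "\<forall>g\<in>P. \<one> \<otimes> g \<otimes> inv \<one> \<otimes> inv g \<in> Z"
      proof
        fix g assume "g \<in> P"
        then have gG: "g \<in> carrier G" using PG by blast
        have "\<one> \<otimes> g \<otimes> inv \<one> \<otimes> inv g = \<one>" using gG by simp
        then show "\<one> \<otimes> g \<otimes> inv \<one> \<otimes> inv g \<in> Z" using subgroup.one_closed[OF Zs(1)] by simp
      qed
      ultimately have "\<one> \<in> ucs G P (Suc n)" unfolding S by blast
      then show ?thesis by blast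
    qed
  next
    fix x assume x: "x \<in> ucs G P (Suc n)"
    have xx: "x \<in> P \<and> (\<forall>g\<in>P. x \<otimes> g \<otimes> inv x \<otimes> inv g \<in> Z)" using x unfolding S mem_Collect_eq .
    then have xP: "x \<in> P" and xc: "\<And>g. g \<in> P \<Longrightarrow> x \<otimes> g \<otimes> inv x \<otimes> inv g \<in> Z" using xx by blast+
    have xG: "x \<in> carrier G" using xP PG by blast
    show "inv x \<in> ucs G P (Suc n)" unfolding S
    proof (intro CollectI conjI ballI)
      show "inv x \<in> P" using subgroup.m_inv_closed[OF P xP] .
      fix g assume g: "g \<in> P"
      have gG: "g \<in> carrier G" using g PG by blast
      have c: "x \<otimes> g \<otimes> inv x \<otimes> inv g \<in> Z" using xc g by blast
      then have "inv (x \<otimes> g \<otimes> inv x \<otimes> inv g) \<in> Z" by (rule subgroup.m_inv_closed[OF Zs(1)])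
      have ix: "inv x \<in> P" using subgroup.m_inv_closed[OF P xP] .
      note Zn[OF ix \<open>inv (x \<otimes> g \<otimes> inv x \<otimes> inv g) \<in> Z\<close>]
      then have "inv x \<otimes> (inv (x \<otimes> g \<otimes> inv x \<otimes> inv g)) \<otimes> inv (inv x) \<in> Z" .
      moreover have "inv x \<otimes> (inv (x \<otimes> g \<otimes> inv x \<otimes> inv g)) \<otimes> inv (inv x) = inv x \<otimes> g \<otimes> inv (inv x) \<otimes> inv g"
        using xG gG by (simp add: m_assoc inv_mult_group)
      ultimately show "inv x \<otimes> g \<otimes> inv (inv x) \<otimes> inv g \<in> Z" by (rule back_subst[where P="\<lambda>t. t \<in> Z"])
    qed
  next
    fix x y assume x: "x \<in> ucs G P (Suc n)" and y: "y \<in> ucs G P (Suc n)"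
    have xx: "x \<in> P \<and> (\<forall>g\<in>P. x \<otimes> g \<otimes> inv x \<otimes> inv g \<in> Z)" using x unfolding S mem_Collect_eq .
    have yy: "y \<in> P \<and> (\<forall>g\<in>P. y \<otimes> g \<otimes> inv y \<otimes> inv g \<in> Z)" using y unfolding S mem_Collect_eq .
    have xP: "x \<in> P" and xc: "\<And>g. g \<in> P \<Longrightarrow> x \<otimes> g \<otimes> inv x \<otimes> inv g \<in> Z"
      and yP: "y \<in> P" and yc: "\<And>g. g \<in> P \<Longrightarrow> y \<otimes> g \<otimes> inv y \<otimes> inv g \<in> Z" using xx yy by blast+
    have xG: "x \<in> carrier G" using xP PG by blast
    have yG: "y \<in> carrier G" using yP PG by blast
    show "x \<otimes> y \<in> ucs G P (Suc n)" unfolding S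
    proof (intro CollectI conjI ballI)
      show "x \<otimes> y \<in> P" using subgroup.m_closed[OF P xP yP] .
      fix g assume g: "g \<in> P"
      have gG: "g \<in> carrier G" using g PG by blast
      have a: "x \<otimes> (y \<otimes> g \<otimes> inv y \<otimes> inv g) \<otimes> inv x \<in> Z" using Zn[OF xP yc[OF g]] .
      have b: "x \<otimes> g \<otimes> inv x \<otimes> inv g \<in> Z" using xc[OF g] .
      have "(x \<otimes> (y \<otimes> g \<otimes> inv y \<otimes> inv g) \<otimes> inv x) \<otimes> (x \<otimes> g \<otimes> inv x \<otimes> inv g) \<in> Z"
        using subgroup.m_closed[OF Zs(1) a b] .
      moreover have "(x \<otimes> (y \<otimes> g \<otimes> inv y \<otimes> inv g) \<otimes> inv x) \<otimes> (x \<otimes> g \<otimes> inv x \<otimes> inv g)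
          = x \<otimes> y \<otimes> g \<otimes> inv (x \<otimes> y) \<otimes> inv g"
        using xG yG gG by (simp add: m_assoc inv_mult_group)
      ultimately show "x \<otimes> y \<otimes> g \<otimes> inv (x \<otimes> y) \<otimes> inv g \<in> Z" by (rule back_subst[where P="\<lambda>t. t \<in> Z"])
    qed
  qed
  have norm: "\<forall>h\<in>P. \<forall>x\<in>ucs G P (Suc n). h \<otimes> x \<otimes> inv h \<in> ucs G P (Suc n)"
  proof (intro ballI)
    fix h x assume h: "h \<in> P" and x: "x \<in> ucs G P (Suc n)"
    have xx: "x \<in> P \<and> (\<forall>g\<in>P. x \<otimes> g \<otimes> inv x \<otimes> inv g \<in> Z)" using x unfolding S mem_Collect_eq .
    then have xP: "x \<in> P" and xc: "\<And>g. g \<in> P \<Longrightarrow> x \<otimes> g \<otimes> inv x \<otimes> inv g \<in> Z" using xx by blast+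
    have xG: "x \<in> carrier G" using xP PG by blast
    have hG: "h \<in> carrier G" using h PG by blast
    show "h \<otimes> x \<otimes> inv h \<in> ucs G P (Suc n)" unfolding S
    proof (intro CollectI conjI ballI)
      show "h \<otimes> x \<otimes> inv h \<in> P" using h xP by (auto intro!: subgroup.m_closed[OF P] subgroup.m_inv_closed[OF P])
      fix g assume g: "g \<in> P"
      have gG: "g \<in> carrier G" using g PG by blast
      have g': "inv h \<otimes> g \<otimes> h \<in> P" using h g by (auto intro!: subgroup.m_closed[OF P] subgroup.m_inv_closed[OF P])
      have "h \<otimes> (x \<otimes> (inv h \<otimes> g \<otimes> h) \<otimes> inv x \<otimes> inv (inv h \<otimes> g \<otimes> h)) \<otimes> inv h \<in> Z"
        using Zn[OF h xc[OF g']] .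
      moreover have "h \<otimes> (x \<otimes> (inv h \<otimes> g \<otimes> h) \<otimes> inv x \<otimes> inv (inv h \<otimes> g \<otimes> h)) \<otimes> inv h
          = h \<otimes> x \<otimes> inv h \<otimes> g \<otimes> inv (h \<otimes> x \<otimes> inv h) \<otimes> inv g"
        using xG hG gG by (simp add: m_assoc inv_mult_group)
      ultimately show "h \<otimes> x \<otimes> inv h \<otimes> g \<otimes> inv (h \<otimes> x \<otimes> inv h) \<otimes> inv g \<in> Z" by (rule back_subst[where P="\<lambda>t. t \<in> Z"])
    qed
  qed
  show ?case unfolding nsub_def using sub norm S by blast
qed

end

context group begin

lemma conj_coset:
  assumes Z: "nsub Z P" and P: "subgroup P G" and g: "g \<in> P" and x: "x \<in> P"
  shows "g <# (Z #> x) #> inv g = Z #> (g \<otimes> x \<otimes> inv g)"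
proof -
  have PG: "P \<subseteq> carrier G" using subgroup.subset[OF P] .
  have ZP: "Z \<subseteq> P" and Zs: "subgroup Z G" and Zn: "\<And>g z. g \<in> P \<Longrightarrow> z \<in> Z \<Longrightarrow> g \<otimes> z \<otimes> inv g \<in> Z"
    using Z unfolding nsub_def by auto
  have gG: "g \<in> carrier G" and xG: "x \<in> carrier G" using g x PG by auto
  have ZG: "Z \<subseteq> carrier G" using ZP PG by blast
  show ?thesis
  proof
    show "g <# (Z #> x) #> inv g \<subseteq> Z #> (g \<otimes> x \<otimes> inv g)"
    proof
      fix y assume "y \<in> g <# (Z #> x) #> inv g"
      then obtain z where z: "z \<in> Z" and y: "y = g \<otimes> (z \<otimes> x) \<otimes> inv g"
        unfolding l_coset_def r_coset_def by auto
      have zG: "z \<in> carrier G" using z ZG by blast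
      have "y = (g \<otimes> z \<otimes> inv g) \<otimes> (g \<otimes> x \<otimes> inv g)"
        using y gG zG xG by (simp add: m_assoc)
      moreover have "g \<otimes> z \<otimes> inv g \<in> Z" using Zn[OF g z] .
      ultimately show "y \<in> Z #> (g \<otimes> x \<otimes> inv g)" unfolding r_coset_def by blast
    qed
    show "Z #> (g \<otimes> x \<otimes> inv g) \<subseteq> g <# (Z #> x) #> inv g"
    proof
      fix y assume "y \<in> Z #> (g \<otimes> x \<otimes> inv g)"
      then obtain z where z: "z \<in> Z" and y: "y = z \<otimes> (g \<otimes> x \<otimes> inv g)"
        unfolding r_coset_def by auto
      have zG: "z \<in> carrier G" using z ZG by blast
      have ig: "inv g \<in> P" using subgroup.m_inv_closed[OF P g] .
      have z': "inv g \<otimes> z \<otimes> inv (inv g) \<in> Z" using Zn[OF ig z] .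
      have "y = g \<otimes> ((inv g \<otimes> z \<otimes> inv (inv g)) \<otimes> x) \<otimes> inv g"
        using y gG zG xG by (simp add: m_assoc)
      with z' show "y \<in> g <# (Z #> x) #> inv g" unfolding l_coset_def r_coset_def by blast
    qed
  qed
qed

lemma ucs_step:
  assumes fin: "finite (carrier G)" and p: "Factorial_Ring.prime (p::nat)"
    and P: "subgroup P G" and cardP: "card P = p ^ k"
    and Z: "nsub Z P" and ne: "Z \<noteq> P"
  shows "\<exists>x\<in>P. x \<notin> Z \<and> (\<forall>g\<in>P. x \<otimes> g \<otimes> inv x \<otimes> inv g \<in> Z)"
proof -
  have PG: "P \<subseteq> carrier G" using subgroup.subset[OF P] .
  have ZP: "Z \<subseteq> P" and Zs: "subgroup Z G" and Zn: "\<And>g z. g \<in> P \<Longrightarrow> z \<in> Z \<Longrightarrow> g \<otimes> z \<otimes> inv g \<in> Z"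
    using Z unfolding nsub_def by auto
  have ZG: "Z \<subseteq> carrier G" using ZP PG by blast
  have finP: "finite P" using fin PG finite_subset by blast
  define \<phi> where "\<phi> = (\<lambda>g. \<lambda>H\<in>{H. H \<subseteq> carrier G}. g <# H #> inv g)"
  interpret act: group_action "G\<lparr>carrier := P\<rparr>" "{H. H \<subseteq> carrier G}" \<phi>
    unfolding \<phi>_def using group_action.induced_action[OF action_by_conjugation_on_power_set P] .
  define XX where "XX = {Z #> x | x. x \<in> P}"
  have cs: "Z #> x \<subseteq> carrier G" if "x \<in> P" for x
    using r_coset_subset_G[OF ZG] that PG by blast
  have conj: "\<phi> g (Z #> x) = Z #> (g \<otimes> x \<otimes> inv g)" if "g \<in> P" "x \<in> P" for g x
    unfolding \<phi>_def using cs[OF that(2)] conj_coset[OF Z P that] by simp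
  have gxg: "g \<otimes> x \<otimes> inv g \<in> P" if "g \<in> P" "x \<in> P" for g x
    using that by (auto intro!: subgroup.m_closed[OF P] subgroup.m_inv_closed[OF P])
  have finX: "finite XX" unfolding XX_def using finP by auto
  have XE: "XX \<subseteq> {H. H \<subseteq> carrier G}" unfolding XX_def using cs by blast
  have invX: "\<phi> g C \<in> XX" if "g \<in> carrier (G\<lparr>carrier := P\<rparr>)" "C \<in> XX" for g C
    using that conj gxg unfolding XX_def by auto
  have ord: "order (G\<lparr>carrier := P\<rparr>) = p ^ k" unfolding order_def using cardP by simp
  define F where "F = {C \<in> XX. \<forall>g\<in>carrier (G\<lparr>carrier := P\<rparr>). \<phi> g C = C}"
  have pXF: "p dvd card (XX - F)"
    unfolding F_def by (rule act.fixed_points_mod[OF finX XE invX p ord])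
  have rc: "rcosets\<^bsub>G\<lparr>carrier := P\<rparr>\<^esub> Z = XX"
    unfolding RCOSETS_def XX_def by auto
  have lag: "card XX * card Z = card P"
    using group.lagrange[OF subgroup_imp_group[OF P] subgroup_incl[OF Zs P ZP]] rc
    unfolding order_def by simp
  have "card XX dvd p ^ k" using lag cardP by (metis dvd_triv_left)
  then obtain j where j: "j \<le> k" "card XX = p ^ j" using p by (auto simp: divides_primepow_nat)
  have "j \<noteq> 0"
  proof
    assume "j = 0"
    then have "card Z = card P" using lag j by simp
    then have "Z = P" using card_subset_eq[OF finP ZP] by simp
    with ne show False by simp
  qed
  then have pX: "p dvd card XX" using j by (simp add: dvd_power)
  have FX: "F \<subseteq> XX" unfolding F_def by blast
  have "card XX = card F + card (XX - F)"
    using card_Diff_subset[OF finite_subset[OF FX finX] FX] card_mono[OF finX FX] by simp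
  then have pF: "p dvd card F" using pX pXF by (metis dvd_add_left_iff)
  have oneP: "\<one> \<in> P" using subgroup.one_closed[OF P] .
  have ZZ: "Z #> \<one> = Z" using ZG by simp
  have ZF: "Z \<in> F"
  proof -
    have "\<phi> g Z = Z" if "g \<in> P" for g
    proof -
      have gG: "g \<in> carrier G" using that PG by blast
      have "\<phi> g (Z #> \<one>) = Z #> (g \<otimes> \<one> \<otimes> inv g)" using conj[OF that oneP] .
      also have "g \<otimes> \<one> \<otimes> inv g = \<one>" using gG by simp
      finally show ?thesis using ZZ by simp
    qed
    moreover have "Z \<in> XX" unfolding XX_def using oneP ZZ by force
    ultimately show ?thesis unfolding F_def by simp
  qed
  have finF: "finite F" using finite_subset[OF FX finX] .
  have "card F \<noteq> 0" using ZF finF by auto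
  then have "card F \<ge> p" using pF by (simp add: dvd_imp_le)
  moreover have "p \<ge> 2" using p by (simp add: prime_ge_2_nat)
  ultimately have "card F \<ge> 2" by simp
  then have "\<not> F \<subseteq> {Z}" using card_mono[of "{Z}" F] by auto
  then obtain C where C: "C \<in> F" "C \<noteq> Z" by blast
  then obtain x where x: "x \<in> P" "C = Z #> x" unfolding F_def XX_def by blast
  have xG: "x \<in> carrier G" using x PG by blast
  have xZ: "x \<notin> Z"
  proof
    assume "x \<in> Z"
    then have "Z #> x = Z" using subgroup.rcos_const[OF Zs is_group] by blast
    with C x show False by simp
  qed
  have "\<forall>g\<in>P. x \<otimes> g \<otimes> inv x \<otimes> inv g \<in> Z"
  proof
    fix g assume g: "g \<in> P"
    have gG: "g \<in> carrier G" using g PG by blast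
    have "\<phi> g C = C" using C(1) g unfolding F_def by simp
    then have "Z #> (g \<otimes> x \<otimes> inv g) = Z #> x" using conj[OF g x(1)] x by simp
    then have "g \<otimes> x \<otimes> inv g \<otimes> inv x \<in> Z"
      using rcos_eq_iff[OF Zs] gG xG by simp
    then have "inv (g \<otimes> x \<otimes> inv g \<otimes> inv x) \<in> Z" by (rule subgroup.m_inv_closed[OF Zs])
    moreover have "inv (g \<otimes> x \<otimes> inv g \<otimes> inv x) = x \<otimes> g \<otimes> inv x \<otimes> inv g"
      using gG xG by (simp add: m_assoc inv_mult_group)
    ultimately show "x \<otimes> g \<otimes> inv x \<otimes> inv g \<in> Z" by simp
  qed
  then show ?thesis using x xZ by blast
qed

end

context group begin

lemma ucs_mono:
  assumes P: "subgroup P G"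
  shows "ucs G P n \<subseteq> ucs G P (Suc n)"
proof
  fix z assume z: "z \<in> ucs G P n"
  have N: "nsub (ucs G P n) P" using ucs_props[OF P] .
  then have Zs: "subgroup (ucs G P n) G" and ZP: "ucs G P n \<subseteq> P"
    and Zn: "\<And>g z. g \<in> P \<Longrightarrow> z \<in> ucs G P n \<Longrightarrow> g \<otimes> z \<otimes> inv g \<in> ucs G P n"
    unfolding nsub_def by auto
  have PG: "P \<subseteq> carrier G" using subgroup.subset[OF P] .
  have zP: "z \<in> P" using z ZP by blast
  have zG: "z \<in> carrier G" using zP PG by blast
  have "\<forall>g\<in>P. z \<otimes> g \<otimes> inv z \<otimes> inv g \<in> ucs G P n"
  proof
    fix g assume g: "g \<in> P"
    have gG: "g \<in> carrier G" using g PG by blast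
    have iz: "inv z \<in> ucs G P n" using subgroup.m_inv_closed[OF Zs z] .
    have "g \<otimes> inv z \<otimes> inv g \<in> ucs G P n" using Zn[OF g iz] .
    then have "z \<otimes> (g \<otimes> inv z \<otimes> inv g) \<in> ucs G P n" using subgroup.m_closed[OF Zs z] by blast
    moreover have "z \<otimes> (g \<otimes> inv z \<otimes> inv g) = z \<otimes> g \<otimes> inv z \<otimes> inv g"
      using zG gG by (simp add: m_assoc)
    ultimately show "z \<otimes> g \<otimes> inv z \<otimes> inv g \<in> ucs G P n" by simp
  qed
  then show "z \<in> ucs G P (Suc n)" using zP by simp
qed

lemma ucs_grow:
  assumes fin: "finite (carrier G)" and p: "Factorial_Ring.prime (p::nat)"
    and P: "subgroup P G" and cardP: "card P = p ^ k"
  shows "ucs G P n = P \<or> n < card (ucs G P n)"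
proof (induction n)
  case 0 then show ?case by simp
next
  case (Suc n)
  have PG: "P \<subseteq> carrier G" using subgroup.subset[OF P] .
  have finP: "finite P" using fin PG finite_subset by blast
  have sub1: "ucs G P (Suc n) \<subseteq> P" using ucs_props[OF P] unfolding nsub_def by blast
  show ?case
  proof (cases "ucs G P n = P")
    case True
    have "P \<subseteq> ucs G P (Suc n)"
    proof
      fix x assume x: "x \<in> P"
      have xG: "x \<in> carrier G" using x PG by blast
      have "\<forall>g\<in>P. x \<otimes> g \<otimes> inv x \<otimes> inv g \<in> P"
        using x by (auto intro!: subgroup.m_closed[OF P] subgroup.m_inv_closed[OF P])
      then show "x \<in> ucs G P (Suc n)" using x True by simp
    qed
    then show ?thesis using sub1 by blast
  next
    case False
    then have lt: "n < card (ucs G P n)" using Suc by simp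
    obtain x where x: "x \<in> P" "x \<notin> ucs G P n" "\<forall>g\<in>P. x \<otimes> g \<otimes> inv x \<otimes> inv g \<in> ucs G P n"
      using ucs_step[OF fin p P cardP ucs_props[OF P] False] by blast
    have "x \<in> ucs G P (Suc n)" using x by simp
    then have "ucs G P n \<subset> ucs G P (Suc n)" using ucs_mono[OF P, of n] x(2) by blast
    then have "card (ucs G P n) < card (ucs G P (Suc n))"
      using psubset_card_mono finite_subset[OF sub1 finP] by blast
    then show ?thesis using lt by simp
  qed
qed

lemma ucs_top:
  assumes fin: "finite (carrier G)" and p: "Factorial_Ring.prime (p::nat)"
    and P: "subgroup P G" and cardP: "card P = p ^ k"
  shows "ucs G P (card P) = P"
proof -
  have PG: "P \<subseteq> carrier G" using subgroup.subset[OF P] .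
  have finP: "finite P" using fin PG finite_subset by blast
  have sub1: "ucs G P (card P) \<subseteq> P" using ucs_props[OF P] unfolding nsub_def by blast
  have "card (ucs G P (card P)) \<le> card P" using card_mono[OF finP sub1] .
  then show ?thesis using ucs_grow[OF fin p P cardP, of "card P"] by simp
qed

lemma lcs_in_ucs:
  assumes P: "subgroup P G" and top: "ucs G P m = P"
  shows "j \<le> m \<Longrightarrow> lcs G P j \<subseteq> ucs G P (m - j)"
proof (induction j)
  case 0 then show ?case using top by simp
next
  case (Suc j)
  then have IH: "lcs G P j \<subseteq> ucs G P (Suc (m - Suc j))" by (simp add: Suc_diff_Suc)
  have Zs: "subgroup (ucs G P (m - Suc j)) G" using ucs_props[OF P] unfolding nsub_def by blast
  have "{a \<otimes> b \<otimes> inv a \<otimes> inv b | a b. a \<in> lcs G P j \<and> b \<in> P} \<subseteq> ucs G P (m - Suc j)"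
  proof
    fix c assume "c \<in> {a \<otimes> b \<otimes> inv a \<otimes> inv b | a b. a \<in> lcs G P j \<and> b \<in> P}"
    then obtain a b where c: "c = a \<otimes> b \<otimes> inv a \<otimes> inv b" and a: "a \<in> lcs G P j" and b: "b \<in> P" by blast
    have "a \<in> ucs G P (Suc (m - Suc j))" using IH a by blast
    then show "c \<in> ucs G P (m - Suc j)" using b c by simp
  qed
  then show ?case unfolding lcs.simps comm_subgroup_def using generate_subgroup_incl[OF _ Zs] by blast
qed

theorem pgroup_nilpotent:
  assumes fin: "finite (carrier G)" and p: "Factorial_Ring.prime (p::nat)"
    and P: "subgroup P G" and cardP: "card P = p ^ k"
  shows "lcs G P (card P) = {\<one>}"
proof -
  have "lcs G P (card P) \<subseteq> ucs G P 0"
    using lcs_in_ucs[OF P ucs_top[OF fin p P cardP], of "card P"] by simp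
  moreover have "\<one> \<in> lcs G P (card P)" using lcs_sub[OF P] subgroup.one_closed by blast
  ultimately show ?thesis by auto
qed

end

context group begin

lemma normal_sub_I:
  assumes N: "subgroup N G" and L: "subgroup L G" and LN: "L \<subseteq> N"
    and cj: "\<And>x h. x \<in> N \<Longrightarrow> h \<in> L \<Longrightarrow> x \<otimes> h \<otimes> inv x \<in> L"
  shows "L \<lhd> G\<lparr>carrier := N\<rparr>"
proof -
  interpret GN: group "G\<lparr>carrier := N\<rparr>" using subgroup_imp_group[OF N] .
  show ?thesis
  proof (rule GN.normal_invI)
    show "subgroup L (G\<lparr>carrier := N\<rparr>)" using subgroup_incl[OF L N LN] .
    fix x h assume x: "x \<in> carrier (G\<lparr>carrier := N\<rparr>)" and h: "h \<in> L"
    have "inv\<^bsub>G\<lparr>carrier := N\<rparr>\<^esub> x = inv x" using x N by simp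
    then show "x \<otimes>\<^bsub>G\<lparr>carrier := N\<rparr>\<^esub> h \<otimes>\<^bsub>G\<lparr>carrier := N\<rparr>\<^esub> inv\<^bsub>G\<lparr>carrier := N\<rparr>\<^esub> x \<in> L"
      using cj[of x h] x h by simp
  qed
qed

lemma quotient_pow:
  assumes fin: "finite (carrier G)" and N: "subgroup N G" and L: "subgroup L G" and LN: "L \<subseteq> N"
    and cj: "\<And>x h. x \<in> N \<Longrightarrow> h \<in> L \<Longrightarrow> x \<otimes> h \<otimes> inv x \<in> L"
    and z: "z \<in> N"
  shows "z [^] (card N div card L) \<in> L"
proof -
  interpret GN: group "G\<lparr>carrier := N\<rparr>" using subgroup_imp_group[OF N] .
  interpret LN: normal L "G\<lparr>carrier := N\<rparr>" using normal_sub_I[OF N L LN cj] .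
  have PG: "N \<subseteq> carrier G" using subgroup.subset[OF N] .
  have finN: "finite N" using fin PG finite_subset by blast
  have finL: "finite L" using finN LN finite_subset by blast
  have cL: "card L > 0" using subgroup.one_closed[OF L] finL card_gt_0_iff by blast
  have lag: "card (rcosets\<^bsub>G\<lparr>carrier := N\<rparr>\<^esub> L) * card L = card N"
    using GN.lagrange[OF subgroup_incl[OF L N LN]] unfolding order_def by simp
  then have eqc: "card (rcosets\<^bsub>G\<lparr>carrier := N\<rparr>\<^esub> L) = card N div card L"
    using cL by (metis div_mult_self_is_m)
  have ordQ: "order (G\<lparr>carrier := N\<rparr> Mod L) = card N div card L"
    unfolding order_def FactGroup_def using eqc by simp
  interpret Q: group "G\<lparr>carrier := N\<rparr> Mod L" using LN.factorgroup_is_group .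
  have zc: "L #>\<^bsub>G\<lparr>carrier := N\<rparr>\<^esub> z \<in> carrier (G\<lparr>carrier := N\<rparr> Mod L)"
    unfolding FactGroup_def RCOSETS_def using z by auto
  have "(L #>\<^bsub>G\<lparr>carrier := N\<rparr>\<^esub> z) [^]\<^bsub>G\<lparr>carrier := N\<rparr> Mod L\<^esub> (card N div card L) = \<one>\<^bsub>G\<lparr>carrier := N\<rparr> Mod L\<^esub>"
    using Q.pow_order_eq_1[OF zc] ordQ by simp
  then have "L #>\<^bsub>G\<lparr>carrier := N\<rparr>\<^esub> (z [^]\<^bsub>G\<lparr>carrier := N\<rparr>\<^esub> (card N div card L)) = L"
    using LN.FactGroup_pow[of z "card N div card L"] z by simp
  moreover have "z [^]\<^bsub>G\<lparr>carrier := N\<rparr>\<^esub> (card N div card L) = z [^] (card N div card L)"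
    using nat_pow_consistent by simp
  ultimately have eq: "L #> (z [^] (card N div card L)) = L" by simp
  have "z [^] (card N div card L) \<in> carrier G" using z PG by blast
  then have "z [^] (card N div card L) \<in> L #> (z [^] (card N div card L))"
    using rcos_self[OF _ L] by blast
  then show ?thesis using eq by simp
qed

definition nrm :: "'a set \<Rightarrow> 'a set \<Rightarrow> 'a set" where
  "nrm M L = {g \<in> M. \<forall>r\<in>L. g \<otimes> r \<otimes> inv g \<in> L \<and> inv g \<otimes> r \<otimes> g \<in> L}"

lemma nrm_props:
  assumes M: "subgroup M G" and L: "subgroup L G" and LM: "L \<subseteq> M"
  shows "subgroup (nrm M L) G" "L \<subseteq> nrm M L" "nrm M L \<subseteq> M"
    "\<And>x h. x \<in> nrm M L \<Longrightarrow> h \<in> L \<Longrightarrow> x \<otimes> h \<otimes> inv x \<in> L"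
proof -
  have MG: "M \<subseteq> carrier G" using subgroup.subset[OF M] .
  have LG: "L \<subseteq> carrier G" using LM MG by blast
  show "nrm M L \<subseteq> M" unfolding nrm_def by blast
  show "\<And>x h. x \<in> nrm M L \<Longrightarrow> h \<in> L \<Longrightarrow> x \<otimes> h \<otimes> inv x \<in> L" unfolding nrm_def by blast
  show "L \<subseteq> nrm M L"
  proof
    fix g assume g: "g \<in> L"
    have "\<forall>r\<in>L. g \<otimes> r \<otimes> inv g \<in> L \<and> inv g \<otimes> r \<otimes> g \<in> L"
      using g by (auto intro!: subgroup.m_closed[OF L] subgroup.m_inv_closed[OF L])
    then show "g \<in> nrm M L" unfolding nrm_def using g LM by blast
  qed
  show "subgroup (nrm M L) G"
  proof (rule subgroupI)
    show "nrm M L \<subseteq> carrier G" unfolding nrm_def using MG by blast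
    have "\<one> \<in> nrm M L" unfolding nrm_def using subgroup.one_closed[OF M] LG by auto
    then show "nrm M L \<noteq> {}" by blast
  next
    fix a assume a: "a \<in> nrm M L"
    have aM: "a \<in> M" and a1: "\<And>r. r \<in> L \<Longrightarrow> a \<otimes> r \<otimes> inv a \<in> L" and a2: "\<And>r. r \<in> L \<Longrightarrow> inv a \<otimes> r \<otimes> a \<in> L"
      using a unfolding nrm_def by auto
    have aG: "a \<in> carrier G" using aM MG by blast
    show "inv a \<in> nrm M L" unfolding nrm_def
      using subgroup.m_inv_closed[OF M aM] a1 a2 aG by simp
  next
    fix a b assume a: "a \<in> nrm M L" and b: "b \<in> nrm M L"
    have aM: "a \<in> M" and a1: "\<And>r. r \<in> L \<Longrightarrow> a \<otimes> r \<otimes> inv a \<in> L" and a2: "\<And>r. r \<in> L \<Longrightarrow> inv a \<otimes> r \<otimes> a \<in> L"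
      using a unfolding nrm_def by auto
    have bM: "b \<in> M" and b1: "\<And>r. r \<in> L \<Longrightarrow> b \<otimes> r \<otimes> inv b \<in> L" and b2: "\<And>r. r \<in> L \<Longrightarrow> inv b \<otimes> r \<otimes> b \<in> L"
      using b unfolding nrm_def by auto
    have aG: "a \<in> carrier G" using aM MG by blast
    have bG: "b \<in> carrier G" using bM MG by blast
    have "\<forall>r\<in>L. a \<otimes> b \<otimes> r \<otimes> inv (a \<otimes> b) \<in> L \<and> inv (a \<otimes> b) \<otimes> r \<otimes> (a \<otimes> b) \<in> L"
    proof
      fix r assume r: "r \<in> L"
      have rG: "r \<in> carrier G" using r LG by blast
      have e1: "a \<otimes> b \<otimes> r \<otimes> inv (a \<otimes> b) = a \<otimes> (b \<otimes> r \<otimes> inv b) \<otimes> inv a"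
        using aG bG rG by (simp add: m_assoc inv_mult_group)
      have e2: "inv (a \<otimes> b) \<otimes> r \<otimes> (a \<otimes> b) = inv b \<otimes> (inv a \<otimes> r \<otimes> a) \<otimes> b"
        using aG bG rG by (simp add: m_assoc inv_mult_group)
      show "a \<otimes> b \<otimes> r \<otimes> inv (a \<otimes> b) \<in> L \<and> inv (a \<otimes> b) \<otimes> r \<otimes> (a \<otimes> b) \<in> L"
        using e1 e2 a1[OF b1[OF r]] b2[OF a2[OF r]] by simp
    qed
    then show "a \<otimes> b \<in> nrm M L" unfolding nrm_def using subgroup.m_closed[OF M aM bM] by blast
  qed
qed

lemma nrm_grows:
  assumes M: "subgroup M G" and L: "subgroup L G" and LM: "L \<subseteq> M" and ne: "L \<noteq> M"
    and nil: "lcs G M c = {\<one>}"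
  shows "L \<subset> nrm M L"
proof -
  have MG: "M \<subseteq> carrier G" using subgroup.subset[OF M] .
  have LG: "L \<subseteq> carrier G" using LM MG by blast
  define S where "S = {i. lcs G M i \<subseteq> L}"
  have cS: "c \<in> S" unfolding S_def using nil subgroup.one_closed[OF L] by simp
  define i where "i = (LEAST i. i \<in> S)"
  have iS: "i \<in> S" unfolding i_def using cS by (rule LeastI)
  have i0: "i \<noteq> 0"
  proof
    assume "i = 0"
    then have "M \<subseteq> L" using iS unfolding S_def by simp
    with LM ne show False by blast
  qed
  then obtain j where ij: "i = Suc j" by (cases i) auto
  have jS: "j \<notin> S" using not_less_Least[of j "\<lambda>i. i \<in> S"] ij unfolding i_def by simp
  then obtain y where y: "y \<in> lcs G M j" "y \<notin> L" unfolding S_def by blast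
  have lj: "subgroup (lcs G M j) G" "lcs G M j \<subseteq> M" using lcs_sub[OF M] by auto
  have yM: "y \<in> M" using y lj by blast
  have yG: "y \<in> carrier G" using yM MG by blast
  have comm: "a \<otimes> b \<otimes> inv a \<otimes> inv b \<in> L" if "a \<in> lcs G M j" "b \<in> M" for a b
  proof -
    have "a \<otimes> b \<otimes> inv a \<otimes> inv b \<in> lcs G M (Suc j)"
      unfolding lcs.simps comm_subgroup_def using that by (blast intro: generate.incl)
    then show ?thesis using iS ij unfolding S_def by blast
  qed
  have "y \<in> nrm M L"
  proof -
    have "\<forall>r\<in>L. y \<otimes> r \<otimes> inv y \<in> L \<and> inv y \<otimes> r \<otimes> y \<in> L"
    proof
      fix r assume r: "r \<in> L"
      have rG: "r \<in> carrier G" using r LG by blast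
      have rM: "r \<in> M" using r LM by blast
      have c1: "y \<otimes> r \<otimes> inv y \<otimes> inv r \<in> L" using comm[OF y(1) rM] .
      have "(y \<otimes> r \<otimes> inv y \<otimes> inv r) \<otimes> r \<in> L" using subgroup.m_closed[OF L c1 r] .
      moreover have "(y \<otimes> r \<otimes> inv y \<otimes> inv r) \<otimes> r = y \<otimes> r \<otimes> inv y"
        using yG rG by (simp add: m_assoc)
      ultimately have A: "y \<otimes> r \<otimes> inv y \<in> L" by simp
      have iy: "inv y \<in> lcs G M j" using subgroup.m_inv_closed[OF lj(1) y(1)] .
      have c2: "inv y \<otimes> r \<otimes> inv (inv y) \<otimes> inv r \<in> L" using comm[OF iy rM] .
      have "(inv y \<otimes> r \<otimes> inv (inv y) \<otimes> inv r) \<otimes> r \<in> L" using subgroup.m_closed[OF L c2 r] .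
      moreover have "(inv y \<otimes> r \<otimes> inv (inv y) \<otimes> inv r) \<otimes> r = inv y \<otimes> r \<otimes> y"
        using yG rG by (simp add: m_assoc)
      ultimately have B: "inv y \<otimes> r \<otimes> y \<in> L" by simp
      show "y \<otimes> r \<otimes> inv y \<in> L \<and> inv y \<otimes> r \<otimes> y \<in> L" using A B by blast
    qed
    then show ?thesis unfolding nrm_def using yM by blast
  qed
  then show ?thesis using nrm_props(2)[OF M L LM] y(2) by blast
qed

theorem nilpotent_pow:
  assumes fin: "finite (carrier G)" and M: "subgroup M G" and nil: "lcs G M c = {\<one>}"
  shows "subgroup L G \<Longrightarrow> L \<subseteq> M \<Longrightarrow> y \<in> M \<Longrightarrow> y [^] (card M div card L) \<in> L"
proof (induction "card M - card L" arbitrary: L y rule: less_induct)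
  case less
  have MG: "M \<subseteq> carrier G" using subgroup.subset[OF M] .
  have finM: "finite M" using fin MG finite_subset by blast
  have yG: "y \<in> carrier G" using less.prems MG by blast
  show ?case
  proof (cases "L = M")
    case True
    have "card M > 0" using subgroup.one_closed[OF M] finM card_gt_0_iff by blast
    then show ?thesis using True less.prems yG by simp
  next
    case False
    define N where "N = nrm M L"
    have Ns: "subgroup N G" "L \<subseteq> N" "N \<subseteq> M" "\<And>x h. x \<in> N \<Longrightarrow> h \<in> L \<Longrightarrow> x \<otimes> h \<otimes> inv x \<in> L"
      using nrm_props[OF M less.prems(1,2)] unfolding N_def by auto
    have LN: "L \<subset> N" using nrm_grows[OF M less.prems(1,2) False nil] unfolding N_def .
    have finN: "finite N" using finM Ns(3) finite_subset by blast
    have "card L < card N" using psubset_card_mono[OF finN LN] .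
    moreover have "card N \<le> card M" using card_mono[OF finM Ns(3)] .
    ultimately have lt: "card M - card N < card M - card L" by simp
    have z: "y [^] (card M div card N) \<in> N" using less.hyps[OF lt Ns(1) Ns(3) less.prems(3)] .
    have z2: "(y [^] (card M div card N)) [^] (card N div card L) \<in> L"
      using quotient_pow[OF fin Ns(1) less.prems(1) Ns(2) Ns(4) z] .
    have l1: "card (rcosets\<^bsub>G\<lparr>carrier := M\<rparr>\<^esub> N) * card N = card M"
      using group.lagrange[OF subgroup_imp_group[OF M] subgroup_incl[OF Ns(1) M Ns(3)]]
      unfolding order_def by simp
    have l2: "card (rcosets\<^bsub>G\<lparr>carrier := N\<rparr>\<^esub> L) * card L = card N"
      using group.lagrange[OF subgroup_imp_group[OF Ns(1)] subgroup_incl[OF less.prems(1) Ns(1) Ns(2)]]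
      unfolding order_def by simp
    have cL: "card L > 0" using subgroup.one_closed[OF less.prems(1)] finN Ns(2) finite_subset card_gt_0_iff by blast
    have cN: "card N > 0" using subgroup.one_closed[OF Ns(1)] finN card_gt_0_iff by blast
    have "card M div card N * (card N div card L) = card M div card L"
    proof -
      define a where "a = card (rcosets\<^bsub>G\<lparr>carrier := M\<rparr>\<^esub> N)"
      define b where "b = card (rcosets\<^bsub>G\<lparr>carrier := N\<rparr>\<^esub> L)"
      have A: "card M = a * card N" using l1 unfolding a_def by simp
      have B: "card N = b * card L" using l2 unfolding b_def by simp
      show ?thesis using A B cL cN by simp
    qed
    then show ?thesis using z2 yG by (simp add: nat_pow_pow)
  qed
qed

end

context group begin

lemma lagrange_sub:
  assumes "subgroup H G" "subgroup L G" "L \<subseteq> H"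
  shows "card (rcosets\<^bsub>G\<lparr>carrier := H\<rparr>\<^esub> L) * card L = card H"
  using group.lagrange[OF subgroup_imp_group[OF assms(1)] subgroup_incl[OF assms(2,1,3)]]
  unfolding order_def by simp

lemma index_dvd:
  assumes fin: "finite (carrier G)" and K: "K \<lhd> G" and H: "subgroup H G"
  shows "\<exists>t. order G div card H = (card K div card (K \<inter> H)) * t"
proof -
  interpret snd: second_isomorphism_grp K G H
    using K H unfolding second_isomorphism_grp_def second_isomorphism_grp_axioms_def by blast
  have Ks: "subgroup K G" using normal_imp_subgroup[OF K] .
  have KH: "subgroup (K <#> H) G" using snd.normal_set_mult_subgroup .
  have KiH: "subgroup (K \<inter> H) G" using subgroups_Inter_pair[OF Ks H] .
  have KG: "K \<subseteq> carrier G" using subgroup.subset[OF Ks] .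
  have HG: "H \<subseteq> carrier G" using subgroup.subset[OF H] .
  have KKH: "K \<subseteq> K <#> H"
  proof
    fix k assume k: "k \<in> K"
    have "k = k \<otimes> \<one>" using k KG by simp
    then show "k \<in> K <#> H" unfolding set_mult_def using k subgroup.one_closed[OF H] by blast
  qed
  have iso: "(G\<lparr>carrier := H\<rparr> Mod (K \<inter> H)) \<cong> (G\<lparr>carrier := K <#> H\<rparr> Mod K)"
    using snd.normal_intersection_quotient_isom is_isoI by blast
  then have eqa: "card (rcosets\<^bsub>G\<lparr>carrier := H\<rparr>\<^esub> (K \<inter> H)) = card (rcosets\<^bsub>G\<lparr>carrier := K <#> H\<rparr>\<^esub> K)"
    using iso_same_card unfolding FactGroup_def by fastforce
  define a where "a = card (rcosets\<^bsub>G\<lparr>carrier := H\<rparr>\<^esub> (K \<inter> H))"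
  have l1: "a * card (K \<inter> H) = card H" unfolding a_def using lagrange_sub[OF H KiH] by simp
  have l2: "a * card K = card (K <#> H)" unfolding a_def eqa using lagrange_sub[OF KH Ks KKH] .
  have l3: "card (rcosets (K <#> H)) * card (K <#> H) = order G" using lagrange[OF KH] .
  have l4: "card (rcosets\<^bsub>G\<lparr>carrier := K\<rparr>\<^esub> (K \<inter> H)) * card (K \<inter> H) = card K"
    using lagrange_sub[OF Ks KiH] by simp
  define b where "b = card (rcosets (K <#> H))"
  define c where "c = card (rcosets\<^bsub>G\<lparr>carrier := K\<rparr>\<^esub> (K \<inter> H))"
  have finKH: "finite (K \<inter> H)" using fin KG finite_subset by blast
  have pos: "card (K \<inter> H) > 0" using finKH subgroup.one_closed[OF KiH] card_gt_0_iff by blast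
  have pa: "a > 0" using l1 H fin HG subgroup.one_closed[OF H] finite_subset card_gt_0_iff
    by (metis mult_is_0 neq0_conv empty_iff)
  have "order G = b * (a * (c * card (K \<inter> H)))" using l2 l3 l4 unfolding b_def c_def by simp
  moreover have "card H = a * card (K \<inter> H)" using l1 by simp
  moreover have "card K = c * card (K \<inter> H)" using l4 unfolding c_def by simp
  ultimately have "order G div card H = (card K div card (K \<inter> H)) * b"
    using pos pa by simp
  then show ?thesis by blast
qed

theorem nilnormal_T:
  assumes fin: "finite (carrier G)" and K: "K \<lhd> G" and nil: "lcs G K c = {\<one>}"
    and H: "subgroup H G" and z: "z \<in> K"
  shows "z [^] (order G div card H) \<in> H"
proof -
  have Ks: "subgroup K G" using normal_imp_subgroup[OF K] .
  have KiH: "subgroup (K \<inter> H) G" using subgroups_Inter_pair[OF Ks H] .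
  have zG: "z \<in> carrier G" using z subgroup.subset[OF Ks] by blast
  obtain t where t: "order G div card H = (card K div card (K \<inter> H)) * t"
    using index_dvd[OF fin K H] by blast
  have "z [^] (card K div card (K \<inter> H)) \<in> K \<inter> H"
    using nilpotent_pow[OF fin Ks nil KiH _ z] by blast
  then have A: "z [^] (card K div card (K \<inter> H)) \<in> H" by blast
  have "(z [^] (card K div card (K \<inter> H))) [^] t \<in> H"
  proof (induction t)
    case 0 then show ?case using subgroup.one_closed[OF H] by simp
  next
    case (Suc t) then show ?case using subgroup.m_closed[OF H Suc A] by simp
  qed
  then show ?thesis using t zG by (simp add: nat_pow_pow)
qed

end

context group begin

definition Tp :: "'a \<Rightarrow> bool" where
  "Tp z \<longleftrightarrow> (\<forall>H. subgroup H G \<longrightarrow> z [^] (order G div card H) \<in> H)"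

definition syl :: "nat \<Rightarrow> 'a set \<Rightarrow> bool" where
  "syl p P \<longleftrightarrow> subgroup P G \<and> card P = p ^ multiplicity p (order G)"

definition Op :: "nat \<Rightarrow> 'a set" where
  "Op p = \<Inter>{P. syl p P}"

lemma subgroup_pow_closed:
  assumes "subgroup H G" "x \<in> H"
  shows "x [^] (n::nat) \<in> H"
proof (induction n)
  case 0 then show ?case using subgroup.one_closed[OF assms(1)] by simp
next
  case (Suc n) then show ?case using subgroup.m_closed[OF assms(1) Suc assms(2)] by simp
qed

lemma syl_exists:
  assumes fin: "finite (carrier G)" and p: "Factorial_Ring.prime (p::nat)"
  shows "\<exists>P. syl p P"
proof -
  have pos: "order G > 0" using fin order_gt_0_iff_finite by blast
  have "order G = p ^ multiplicity p (order G) * (order G div p ^ multiplicity p (order G))"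
    using multiplicity_dvd[of p "order G"] by simp
  then obtain P where "subgroup P G" "card P = p ^ multiplicity p (order G)"
    using sylow_thm[OF p is_group _ fin] by blast
  then show ?thesis unfolding syl_def by blast
qed

lemma syl_index:
  assumes fin: "finite (carrier G)" and p: "Factorial_Ring.prime (p::nat)" and P: "syl p P"
  shows "order G div card P = order G div p ^ multiplicity p (order G)"
    "\<not> p dvd (order G div card P)"
proof -
  show "order G div card P = order G div p ^ multiplicity p (order G)" using P unfolding syl_def by simp
  have pos: "order G \<noteq> 0" using fin order_gt_0_iff_finite by auto
  have "\<not> is_unit p" using prime_gt_1_nat[OF p] by simp
  then show "\<not> p dvd (order G div card P)"
    using multiplicity_decompose[OF pos] P unfolding syl_def by simp
qed

lemma conj_subgroup:
  assumes P: "subgroup P G" and g: "g \<in> carrier G"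
  shows "subgroup ((\<lambda>y. inv g \<otimes> y \<otimes> g) ` P) G" "card ((\<lambda>y. inv g \<otimes> y \<otimes> g) ` P) = card P"
proof -
  have PG: "P \<subseteq> carrier G" using subgroup.subset[OF P] .
  show "subgroup ((\<lambda>y. inv g \<otimes> y \<otimes> g) ` P) G"
  proof (rule subgroupI)
    show "(\<lambda>y. inv g \<otimes> y \<otimes> g) ` P \<subseteq> carrier G" using PG g by auto
    show "(\<lambda>y. inv g \<otimes> y \<otimes> g) ` P \<noteq> {}" using subgroup.one_closed[OF P] by blast
  next
    fix a assume "a \<in> (\<lambda>y. inv g \<otimes> y \<otimes> g) ` P"
    then obtain y where y: "y \<in> P" "a = inv g \<otimes> y \<otimes> g" by blast
    have yG: "y \<in> carrier G" using y PG by blast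
    have "inv a = inv g \<otimes> inv y \<otimes> g" using y yG g by (simp add: m_assoc inv_mult_group)
    then show "inv a \<in> (\<lambda>y. inv g \<otimes> y \<otimes> g) ` P" using subgroup.m_inv_closed[OF P y(1)] by blast
  next
    fix a b assume "a \<in> (\<lambda>y. inv g \<otimes> y \<otimes> g) ` P" "b \<in> (\<lambda>y. inv g \<otimes> y \<otimes> g) ` P"
    then obtain y z where y: "y \<in> P" "a = inv g \<otimes> y \<otimes> g" and z: "z \<in> P" "b = inv g \<otimes> z \<otimes> g" by blast
    have yG: "y \<in> carrier G" using y PG by blast
    have zG: "z \<in> carrier G" using z PG by blast
    have "a \<otimes> b = inv g \<otimes> (y \<otimes> z) \<otimes> g" using y z yG zG g by (simp add: m_assoc)
    then show "a \<otimes> b \<in> (\<lambda>y. inv g \<otimes> y \<otimes> g) ` P" using subgroup.m_closed[OF P y(1) z(1)] by blast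
  qed
  have "inj_on (\<lambda>y. inv g \<otimes> y \<otimes> g) P"
  proof (rule inj_onI)
    fix y z assume y: "y \<in> P" and z: "z \<in> P" and e: "inv g \<otimes> y \<otimes> g = inv g \<otimes> z \<otimes> g"
    have yG: "y \<in> carrier G" using y PG by blast
    have zG: "z \<in> carrier G" using z PG by blast
    have "inv g \<otimes> y = inv g \<otimes> z" using e yG zG g by (meson inv_closed m_closed r_cancel)
    then show "y = z" using yG zG g by (meson inv_closed l_cancel)
  qed
  then show "card ((\<lambda>y. inv g \<otimes> y \<otimes> g) ` P) = card P" by (rule card_image)
qed

lemma Op_props:
  assumes fin: "finite (carrier G)" and p: "Factorial_Ring.prime (p::nat)"
  shows "Op p \<lhd> G" "\<exists>b. card (Op p) = p ^ b" "\<And>P. syl p P \<Longrightarrow> Op p \<subseteq> P"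
    "\<And>x. x \<in> Op p \<Longrightarrow> x [^] (p ^ multiplicity p (order G)) = \<one>"
proof -
  obtain P0 where P0: "syl p P0" using syl_exists[OF fin p] by blast
  show sub: "\<And>P. syl p P \<Longrightarrow> Op p \<subseteq> P" unfolding Op_def by blast
  have Os: "subgroup (Op p) G" unfolding Op_def
    by (rule subgroups_Inter) (use P0 syl_def in auto)
  show "Op p \<lhd> G"
  proof (rule normal_invI[OF Os])
    fix g h assume g: "g \<in> carrier G" and h: "h \<in> Op p"
    show "g \<otimes> h \<otimes> inv g \<in> Op p" unfolding Op_def
    proof
      fix P assume "P \<in> {P. syl p P}"
      then have P: "syl p P" by simp
      have Ps: "subgroup P G" using P unfolding syl_def by blast
      have PG: "P \<subseteq> carrier G" using subgroup.subset[OF Ps] .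
      have "syl p ((\<lambda>y. inv g \<otimes> y \<otimes> g) ` P)"
        using conj_subgroup[OF Ps g] P unfolding syl_def by simp
      then have "h \<in> (\<lambda>y. inv g \<otimes> y \<otimes> g) ` P" using h unfolding Op_def by blast
      then obtain y where y: "y \<in> P" "h = inv g \<otimes> y \<otimes> g" by blast
      have yG: "y \<in> carrier G" using y PG by blast
      have "g \<otimes> h \<otimes> inv g = y" using y yG g by (simp add: m_assoc)
      then show "g \<otimes> h \<otimes> inv g \<in> P" using y by simp
    qed
  qed
  have P0s: "subgroup P0 G" using P0 unfolding syl_def by blast
  have OP: "Op p \<subseteq> P0" using sub[OF P0] .
  have "card (Op p) dvd card P0"
    using lagrange_sub[OF P0s Os OP] by (metis dvd_triv_right)
  then show "\<exists>b. card (Op p) = p ^ b" using P0 p unfolding syl_def by (auto simp: divides_primepow_nat)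
  fix x assume x: "x \<in> Op p"
  have xP: "x \<in> P0" using x OP by blast
  interpret GP: group "G\<lparr>carrier := P0\<rparr>" using subgroup_imp_group[OF P0s] .
  have "x [^]\<^bsub>G\<lparr>carrier := P0\<rparr>\<^esub> (order (G\<lparr>carrier := P0\<rparr>)) = \<one>\<^bsub>G\<lparr>carrier := P0\<rparr>\<^esub>"
    using GP.pow_order_eq_1 xP by simp
  then show "x [^] (p ^ multiplicity p (order G)) = \<one>"
    using P0 nat_pow_consistent unfolding syl_def order_def by simp
qed

lemma Op_nilpotent:
  assumes fin: "finite (carrier G)" and p: "Factorial_Ring.prime (p::nat)"
  shows "\<exists>c. lcs G (Op p) c = {\<one>}"
proof -
  obtain b where "card (Op p) = p ^ b" using Op_props(2)[OF fin p] by blast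
  then show ?thesis using pgroup_nilpotent[OF fin p normal_imp_subgroup[OF Op_props(1)[OF fin p]]] by blast
qed

lemma coprime_pow_in:
  assumes H: "subgroup H G" and z: "z \<in> carrier G" and m: "m \<noteq> 0"
    and cop: "coprime m (ord z)" and zm: "z [^] m \<in> H"
  shows "z \<in> H"
proof -
  obtain x y where xy: "m * x = ord z * y + gcd m (ord z)" using bezout_nat[OF m] by blast
  then have "m * x = ord z * y + 1" using cop by simp
  then have "z [^] (m * x) = z [^] (ord z * y) \<otimes> z" using z by (simp add: nat_pow_mult[symmetric])
  also have "z [^] (ord z * y) = \<one>" using z by (simp add: nat_pow_pow[symmetric])
  finally have "z = (z [^] m) [^] x" using z by (simp add: nat_pow_pow)
  then show ?thesis using subgroup_pow_closed[OF H zm, of x] by metis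
qed

lemma Tp_pelem:
  assumes fin: "finite (carrier G)" and p: "Factorial_Ring.prime (p::nat)"
    and z: "z \<in> carrier G" and T: "Tp z" and oz: "ord z = p ^ j"
  shows "z \<in> Op p"
  unfolding Op_def
proof
  fix P assume "P \<in> {P. syl p P}"
  then have P: "syl p P" by simp
  have Ps: "subgroup P G" using P unfolding syl_def by blast
  have zm: "z [^] (order G div card P) \<in> P" using T Ps unfolding Tp_def by blast
  have nd: "\<not> p dvd (order G div card P)" using syl_index(2)[OF fin p P] .
  then have m0: "order G div card P \<noteq> 0" by (metis dvd_0_right)
  have "coprime (order G div card P) p" using nd p by (simp add: coprime_commute prime_imp_coprime)
  then have "coprime (order G div card P) (ord z)" unfolding oz by simp
  then show "z \<in> P" using coprime_pow_in[OF Ps z m0 _ zm] by blast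
qed

lemma decomp:
  assumes fin: "finite (carrier G)" and W: "subgroup W G"
  shows "z \<in> carrier G \<Longrightarrow> (\<And>k p j. Factorial_Ring.prime (p::nat) \<Longrightarrow> ord (z [^] (k::nat)) = p ^ j \<Longrightarrow> z [^] k \<in> W)
    \<Longrightarrow> z \<in> W"
proof (induction "ord z" arbitrary: z rule: less_induct)
  case less
  note z = less.prems(1)
  have o1: "ord z \<ge> 1" using ord_ge_1[OF fin z] .
  show ?case
  proof (cases "ord z = 1")
    case True
    then have "z = \<one>" using ord_eq_1[OF z] by simp
    then show ?thesis using subgroup.one_closed[OF W] by simp
  next
    case False
    then obtain p where p: "Factorial_Ring.prime p" "p dvd ord z" using o1
      by (metis prime_factor_nat)
    define a where "a = p ^ multiplicity p (ord z)"
    define b where "b = ord z div a"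
    have ab: "ord z = a * b" unfolding a_def b_def using multiplicity_dvd[of p "ord z"] by simp
    have ndb: "\<not> p dvd b" unfolding b_def a_def using multiplicity_decompose[of "ord z" p] o1 prime_gt_1_nat[OF p(1)] by auto
    show ?thesis
    proof (cases "b = 1")
      case True
      then have "ord (z [^] (1::nat)) = p ^ multiplicity p (ord z)" using ab a_def z by simp
      then show ?thesis using less.prems(2)[OF p(1)] z by (metis nat_pow_eone)
    next
      case False
      have b0: "b \<noteq> 0" using ab o1 by auto
      have a0: "a \<noteq> 0" using ab o1 by auto
      have a1: "a \<noteq> 1"
      proof
        assume "a = 1"
        then have "multiplicity p (ord z) = 0" unfolding a_def using prime_gt_1_nat[OF p(1)] by simp
        then show False using p o1 by (simp add: prime_elem_multiplicity_eq_zero_iff prime_imp_prime_elem)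
      qed
      have cop: "coprime a b" unfolding a_def using ndb p(1)
        by (metis coprime_commute coprime_power_left_iff prime_imp_coprime) 
      have "ord (z [^] a) = b"
        using ord_pow[OF z, of a] ab a0 by simp
      moreover have "ord (z [^] b) = a"
        using ord_pow[OF z, of b] ab b0 by simp
      ultimately have lt1: "ord (z [^] a) < ord z" and lt2: "ord (z [^] b) < ord z"
        using ab a1 False a0 b0 by auto
      have za: "z [^] a \<in> W"
      proof (rule less.hyps[OF lt1])
        show "z [^] a \<in> carrier G" using z by simp
        fix k q j assume "Factorial_Ring.prime (q::nat)" "ord ((z [^] a) [^] (k::nat)) = q ^ j"
        then show "(z [^] a) [^] k \<in> W" using less.prems(2)[of q "a * k" j] z by (simp add: nat_pow_pow)
      qed
      have zb: "z [^] b \<in> W"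
      proof (rule less.hyps[OF lt2])
        show "z [^] b \<in> carrier G" using z by simp
        fix k q j assume "Factorial_Ring.prime (q::nat)" "ord ((z [^] b) [^] (k::nat)) = q ^ j"
        then show "(z [^] b) [^] k \<in> W" using less.prems(2)[of q "b * k" j] z by (simp add: nat_pow_pow)
      qed
      obtain x y where xy: "a * x = b * y + gcd a b" using bezout_nat[OF a0] by blast
      then have xy1: "a * x = b * y + 1" using cop by simp
      have "z [^] (a * x) = z [^] (b * y) \<otimes> z" using z xy1 by (simp add: nat_pow_mult[symmetric])
      then have "z = inv (z [^] (b * y)) \<otimes> z [^] (a * x)" using z by (simp add: m_assoc[symmetric])
      moreover have "z [^] (a * x) \<in> W" using subgroup_pow_closed[OF W za, of x] z by (simp add: nat_pow_pow)
      moreover have "inv (z [^] (b * y)) \<in> W"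
        using subgroup.m_inv_closed[OF W subgroup_pow_closed[OF W zb, of y]] z by (simp add: nat_pow_pow)
      ultimately show ?thesis using subgroup.m_closed[OF W] by metis
    qed
  qed
qed

end

primrec PI :: "('a, 'b) monoid_scheme \<Rightarrow> nat list \<Rightarrow> 'a set" where
  "PI G [] = {\<one>\<^bsub>G\<^esub>}"
| "PI G (p # ps) = group.Op G p <#>\<^bsub>G\<^esub> PI G ps"

primrec EE :: "('a, 'b) monoid_scheme \<Rightarrow> nat list \<Rightarrow> nat" where
  "EE G [] = 1"
| "EE G (p # ps) = p ^ multiplicity p (order G) * EE G ps"

lemma coprime_EE:
  assumes "Factorial_Ring.prime (p::nat)" "\<forall>q\<in>set ps. Factorial_Ring.prime q" "p \<notin> set ps"
  shows "coprime (p ^ m) (EE G ps)"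
  using assms
proof (induction ps)
  case Nil then show ?case by simp
next
  case (Cons q ps)
  have "coprime p q" using Cons.prems by (simp add: primes_coprime)
  then have "coprime (p ^ m) (q ^ multiplicity q (order G))" by simp
  moreover have "coprime (p ^ m) (EE G ps)" using Cons by simp
  ultimately show ?case by simp
qed

context group begin

lemma normal_commute:
  assumes A: "A \<lhd> G" and B: "B \<lhd> G" and AB: "A \<inter> B \<subseteq> {\<one>}" and a: "a \<in> A" and b: "b \<in> B"
  shows "a \<otimes> b = b \<otimes> a"
proof -
  have As: "subgroup A G" and Bs: "subgroup B G" using normal_imp_subgroup A B by auto
  have aG: "a \<in> carrier G" using a subgroup.subset[OF As] by blast
  have bG: "b \<in> carrier G" using b subgroup.subset[OF Bs] by blast
  have "b \<otimes> inv a \<otimes> inv b \<in> A" using normal_invE(2)[OF A bG subgroup.m_inv_closed[OF As a]] .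
  then have cA: "a \<otimes> (b \<otimes> inv a \<otimes> inv b) \<in> A" using subgroup.m_closed[OF As a] by blast
  have "a \<otimes> b \<otimes> inv a \<in> B" using normal_invE(2)[OF B aG b] .
  then have cB: "a \<otimes> b \<otimes> inv a \<otimes> inv b \<in> B" using subgroup.m_closed[OF Bs _ subgroup.m_inv_closed[OF Bs b]] by blast
  have eq: "a \<otimes> (b \<otimes> inv a \<otimes> inv b) = a \<otimes> b \<otimes> inv a \<otimes> inv b" using aG bG by (simp add: m_assoc)
  have "a \<otimes> b \<otimes> inv a \<otimes> inv b = \<one>" using cA cB eq AB by auto
  moreover have "a \<otimes> b = (a \<otimes> b \<otimes> inv a \<otimes> inv b) \<otimes> (b \<otimes> a)" using aG bG by (simp add: m_assoc)
  ultimately show ?thesis using aG bG by simp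
qed

lemma PI_props:
  assumes fin: "finite (carrier G)"
  shows "distinct ps \<Longrightarrow> \<forall>p\<in>set ps. Factorial_Ring.prime p \<Longrightarrow>
    PI G ps \<lhd> G \<and> (\<forall>x\<in>PI G ps. Tp x) \<and> (\<forall>x\<in>PI G ps. x [^] EE G ps = \<one>) \<and> (\<forall>p\<in>set ps. Op p \<subseteq> PI G ps)"
proof (induction ps)
  case Nil
  have "Tp \<one>" unfolding Tp_def
  proof (intro allI impI)
    fix H assume "subgroup H G"
    then show "\<one> [^] (order G div card H) \<in> H" using subgroup.one_closed[of H G] by simp
  qed
  then show ?case using one_is_normal by simp
next
  case (Cons p ps)
  have p: "Factorial_Ring.prime p" and pn: "p \<notin> set ps" using Cons.prems by auto
  have IH: "PI G ps \<lhd> G" "\<forall>x\<in>PI G ps. Tp x" "\<forall>x\<in>PI G ps. x [^] EE G ps = \<one>" "\<forall>q\<in>set ps. Op q \<subseteq> PI G ps"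
    using Cons by auto
  define A where "A = Op p"
  define B where "B = PI G ps"
  have An: "A \<lhd> G" unfolding A_def using Op_props(1)[OF fin p] .
  have Bn: "B \<lhd> G" unfolding B_def using IH(1) .
  have As: "subgroup A G" and Bs: "subgroup B G" using normal_imp_subgroup An Bn by auto
  have AG: "A \<subseteq> carrier G" and BG: "B \<subseteq> carrier G" using subgroup.subset As Bs by auto
  define m where "m = p ^ multiplicity p (order G)"
  have Am: "\<And>x. x \<in> A \<Longrightarrow> x [^] m = \<one>" unfolding A_def m_def using Op_props(4)[OF fin p] by blast
  have Be: "\<And>x. x \<in> B \<Longrightarrow> x [^] EE G ps = \<one>" unfolding B_def using IH(3) by blast
  have cop: "coprime m (EE G ps)" unfolding m_def using coprime_EE[OF p _ pn] Cons.prems by simp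
  have AB: "A \<inter> B \<subseteq> {\<one>}"
  proof
    fix x assume x: "x \<in> A \<inter> B"
    have xG: "x \<in> carrier G" using x AG by blast
    have "ord x dvd m" using Am x xG pow_eq_id by blast
    moreover have "ord x dvd EE G ps" using Be x xG pow_eq_id by blast
    ultimately have "ord x dvd gcd m (EE G ps)" by simp
    then have "ord x = 1" using cop by simp
    then show "x \<in> {\<one>}" using ord_eq_1[OF xG] by simp
  qed
  have comm: "\<And>a b. a \<in> A \<Longrightarrow> b \<in> B \<Longrightarrow> a \<otimes> b = b \<otimes> a" using normal_commute[OF An Bn AB] .
  have TA: "\<And>x. x \<in> A \<Longrightarrow> Tp x"
  proof -
    fix x assume x: "x \<in> A"
    obtain c where c: "lcs G A c = {\<one>}" unfolding A_def using Op_nilpotent[OF fin p] by blast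
    show "Tp x" unfolding Tp_def using nilnormal_T[OF fin An c _ x] by blast
  qed
  have TB: "\<And>x. x \<in> B \<Longrightarrow> Tp x" unfolding B_def using IH(2) by blast
  have norm: "A <#> B \<lhd> G" using normal_subgroup_set_mult_closed[OF An Bn] .
  have T: "\<forall>x\<in>A <#> B. Tp x"
  proof
    fix x assume "x \<in> A <#> B"
    then obtain a b where ab: "a \<in> A" "b \<in> B" "x = a \<otimes> b" unfolding set_mult_def by blast
    have aG: "a \<in> carrier G" and bG: "b \<in> carrier G" using ab AG BG by auto
    show "Tp x" unfolding Tp_def
    proof (intro allI impI)
      fix H assume H: "subgroup H G"
      have "x [^] (order G div card H) = a [^] (order G div card H) \<otimes> b [^] (order G div card H)"
        using ab pow_mult_distrib[OF comm[OF ab(1,2)] aG bG] by simp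
      moreover have "a [^] (order G div card H) \<in> H" using TA[OF ab(1)] H unfolding Tp_def by blast
      moreover have "b [^] (order G div card H) \<in> H" using TB[OF ab(2)] H unfolding Tp_def by blast
      ultimately show "x [^] (order G div card H) \<in> H" using subgroup.m_closed[OF H] by simp
    qed
  qed
  have E: "\<forall>x\<in>A <#> B. x [^] (m * EE G ps) = \<one>"
  proof
    fix x assume "x \<in> A <#> B"
    then obtain a b where ab: "a \<in> A" "b \<in> B" "x = a \<otimes> b" unfolding set_mult_def by blast
    have aG: "a \<in> carrier G" and bG: "b \<in> carrier G" using ab AG BG by auto
    have "x [^] (m * EE G ps) = a [^] (m * EE G ps) \<otimes> b [^] (m * EE G ps)"
      using ab pow_mult_distrib[OF comm[OF ab(1,2)] aG bG] by simp
    also have "a [^] (m * EE G ps) = \<one>" using Am[OF ab(1)] aG by (simp add: nat_pow_pow[symmetric])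
    also have "b [^] (m * EE G ps) = (b [^] EE G ps) [^] m" using bG by (simp add: nat_pow_pow mult.commute)
    also have "\<dots> = \<one>" using Be[OF ab(2)] by simp
    finally show "x [^] (m * EE G ps) = \<one>" by simp
  qed
  have sub1: "A \<subseteq> A <#> B"
  proof
    fix a assume a: "a \<in> A"
    have "a = a \<otimes> \<one>" using a AG by auto
    then show "a \<in> A <#> B" unfolding set_mult_def using a subgroup.one_closed[OF Bs] by blast
  qed
  have sub2: "B \<subseteq> A <#> B"
  proof
    fix b assume b: "b \<in> B"
    have "b = \<one> \<otimes> b" using b BG by auto
    then show "b \<in> A <#> B" unfolding set_mult_def using b subgroup.one_closed[OF As] by blast
  qed
  have "\<forall>q\<in>set (p # ps). Op q \<subseteq> A <#> B"
    using sub1 sub2 IH(4) unfolding A_def B_def by auto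
  then show ?case using norm T E unfolding A_def B_def m_def by simp
qed

definition UU :: "'a set" where
  "UU = \<Union>{K. K \<lhd> G \<and> nilpotent_group (G\<lparr>carrier := K\<rparr>)}"

lemma fitting_eq: "fitting G = generate G UU"
  unfolding fitting_def UU_def by simp

lemma UU_sub: "UU \<subseteq> carrier G"
  unfolding UU_def using normal_imp_subgroup subgroup.subset by blast

lemma F1:
  assumes fin: "finite (carrier G)" and x: "x \<in> carrier G" and T: "Tp x"
  shows "x \<in> fitting G"
proof -
  have W: "subgroup (generate G UU) G" using generate_is_subgroup[OF UU_sub] .
  show ?thesis unfolding fitting_eq
  proof (rule decomp[OF fin W x])
    fix k p j assume p: "Factorial_Ring.prime (p::nat)" and o: "ord (x [^] (k::nat)) = p ^ j"
    have Tk: "Tp (x [^] k)" unfolding Tp_def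
    proof (intro allI impI)
      fix H assume H: "subgroup H G"
      have "x [^] (order G div card H) \<in> H" using T H unfolding Tp_def by blast
      then have "(x [^] (order G div card H)) [^] k \<in> H" using subgroup_pow_closed[OF H] by blast
      then show "(x [^] k) [^] (order G div card H) \<in> H" using x by (simp add: nat_pow_pow mult.commute)
    qed
    have "x [^] k \<in> Op p" using Tp_pelem[OF fin p _ Tk o] x by simp
    moreover have "Op p \<subseteq> UU"
    proof -
      have On: "Op p \<lhd> G" using Op_props(1)[OF fin p] .
      have "nilpotent_group (G\<lparr>carrier := Op p\<rparr>)"
        using nilpotent_sub_iff[OF normal_imp_subgroup[OF On]] Op_nilpotent[OF fin p] by simp
      then show ?thesis unfolding UU_def using On by auto
    qed
    ultimately have "x [^] k \<in> UU" by blast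
    then show "x [^] k \<in> generate G UU" by (rule generate.incl)
  qed
qed

lemma F2:
  assumes fin: "finite (carrier G)" and x: "x \<in> fitting G"
  shows "Tp x"
proof -
  define ps where "ps = filter Factorial_Ring.prime [0..<Suc (order G)]"
  have dps: "distinct ps" and pps: "\<forall>p\<in>set ps. Factorial_Ring.prime p" unfolding ps_def by auto
  have PP: "PI G ps \<lhd> G" "\<forall>x\<in>PI G ps. Tp x" "\<forall>p\<in>set ps. Op p \<subseteq> PI G ps"
    using PI_props[OF fin dps pps] by auto
  have Ws: "subgroup (PI G ps) G" using normal_imp_subgroup[OF PP(1)] .
  have "UU \<subseteq> PI G ps"
  proof
    fix y assume "y \<in> UU"
    then obtain K where K: "K \<lhd> G" "nilpotent_group (G\<lparr>carrier := K\<rparr>)" "y \<in> K" unfolding UU_def by blast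
    have Ks: "subgroup K G" using normal_imp_subgroup[OF K(1)] .
    obtain c where c: "lcs G K c = {\<one>}" using K(2) nilpotent_sub_iff[OF Ks] by blast
    have yG: "y \<in> carrier G" using K(3) subgroup.subset[OF Ks] by blast
    show "y \<in> PI G ps"
    proof (rule decomp[OF fin Ws yG])
      fix k p j assume p: "Factorial_Ring.prime (p::nat)" and o: "ord (y [^] (k::nat)) = p ^ j"
      have zK: "y [^] k \<in> K" using subgroup_pow_closed[OF Ks K(3)] .
      have zG: "y [^] k \<in> carrier G" using yG by simp
      show "y [^] k \<in> PI G ps"
      proof (cases j)
        case 0
        then have "y [^] k = \<one>" using o ord_eq_1[OF zG] by simp
        then show ?thesis using subgroup.one_closed[OF Ws] by simp
      next
        case (Suc j')
        have Tz: "Tp (y [^] k)" unfolding Tp_def using nilnormal_T[OF fin K(1) c _ zK] by blast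
        have zO: "y [^] k \<in> Op p" using Tp_pelem[OF fin p zG Tz o] .
        have "p dvd ord (y [^] k)" using o Suc by simp
        then have "p dvd order G" using ord_dvd_group_order[OF zG] dvd_trans by blast
        then have "p \<le> order G" using fin order_gt_0_iff_finite dvd_imp_le by blast
        then have "p \<in> set ps" unfolding ps_def set_filter set_upt using p by auto
        then show ?thesis using zO PP(3) by blast
      qed
    qed
  qed
  then have "fitting G \<subseteq> PI G ps" unfolding fitting_eq using generate_subgroup_incl[OF _ Ws] by blast
  then show ?thesis using x PP(2) by blast
qed

theorem finite_S_fitting:
  assumes fin: "finite (carrier G)"
  shows "S_set G = fitting G"
proof -
  have idx: "card (rcosets H) = order G div card H" if H: "subgroup H G" for H
  proof -
    have "card H > 0" using subgroup.one_closed[OF H] fin subgroup.subset[OF H] finite_subset card_gt_0_iff by blast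
    then show ?thesis using lagrange[OF H] by (metis div_mult_self_is_m)
  qed
  have finr: "finite (rcosets H)" if H: "subgroup H G" for H
    using fin rcosets_subset_PowG[OF H] finite_subset by blast
  have eq: "x \<in> S_set G \<longleftrightarrow> x \<in> carrier G \<and> Tp x" for x
  proof -
    have "(\<forall>H. subgroup H G \<and> finite (rcosets H) \<longrightarrow> x [^] card (rcosets H) \<in> H)
      \<longleftrightarrow> (\<forall>H. subgroup H G \<longrightarrow> x [^] (order G div card H) \<in> H)"
    proof
      assume A: "\<forall>H. subgroup H G \<and> finite (rcosets H) \<longrightarrow> x [^] card (rcosets H) \<in> H"
      show "\<forall>H. subgroup H G \<longrightarrow> x [^] (order G div card H) \<in> H"
      proof (intro allI impI)
        fix H assume H: "subgroup H G"
        have "x [^] card (rcosets H) \<in> H" using A H finr[OF H] by blast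
        then show "x [^] (order G div card H) \<in> H" using idx[OF H] by metis
      qed
    next
      assume A: "\<forall>H. subgroup H G \<longrightarrow> x [^] (order G div card H) \<in> H"
      show "\<forall>H. subgroup H G \<and> finite (rcosets H) \<longrightarrow> x [^] card (rcosets H) \<in> H"
      proof (intro allI impI)
        fix H assume H: "subgroup H G \<and> finite (rcosets H)"
        have "x [^] (order G div card H) \<in> H" using A H by blast
        then show "x [^] card (rcosets H) \<in> H" using idx H by metis
      qed
    qed
    then show ?thesis unfolding S_set_def Tp_def mem_Collect_eq by (rule arg_cong)
  qed
  have fc: "fitting G \<subseteq> carrier G" unfolding fitting_eq using generate_incl[OF UU_sub] .
  show ?thesis
  proof
    show "S_set G \<subseteq> fitting G"
    proof
      fix x assume "x \<in> S_set G"
      then have "x \<in> carrier G" "Tp x" using eq by auto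
      then show "x \<in> fitting G" using F1[OF fin] by simp
    qed
    show "fitting G \<subseteq> S_set G"
    proof
      fix x assume x: "x \<in> fitting G"
      then have "x \<in> carrier G" "Tp x" using F2[OF fin x] fc by auto
      then show "x \<in> S_set G" using eq by simp
    qed
  qed
qed

end

context group begin

lemma core_exists:
  assumes H: "subgroup H G" and fH: "finite (rcosets H)"
  shows "\<exists>N. N \<lhd> G \<and> N \<subseteq> H \<and> finite (rcosets N)"
proof -
  have HG: "H \<subseteq> carrier G" using subgroup.subset[OF H] .
  define N where "N = {y \<in> carrier G. \<forall>a\<in>carrier G. a \<otimes> y \<otimes> inv a \<in> H}"
  have NG: "N \<subseteq> carrier G" unfolding N_def by blast
  have Ns: "subgroup N G"
  proof (rule subgroupI)
    show "N \<subseteq> carrier G" using NG .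
    have "\<one> \<in> N" unfolding N_def using subgroup.one_closed[OF H] by simp
    then show "N \<noteq> {}" by blast
  next
    fix y assume y: "y \<in> N"
    have yG: "y \<in> carrier G" using y NG by blast
    have "\<forall>a\<in>carrier G. a \<otimes> inv y \<otimes> inv a \<in> H"
    proof
      fix a assume a: "a \<in> carrier G"
      have "a \<otimes> y \<otimes> inv a \<in> H" using y a unfolding N_def by blast
      then have "inv (a \<otimes> y \<otimes> inv a) \<in> H" by (rule subgroup.m_inv_closed[OF H])
      moreover have "inv (a \<otimes> y \<otimes> inv a) = a \<otimes> inv y \<otimes> inv a" using a yG by (simp add: m_assoc inv_mult_group)
      ultimately show "a \<otimes> inv y \<otimes> inv a \<in> H" by simp
    qed
    then show "inv y \<in> N" unfolding N_def using yG by simp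
  next
    fix y z assume y: "y \<in> N" and z: "z \<in> N"
    have yG: "y \<in> carrier G" and zG: "z \<in> carrier G" using y z NG by auto
    have "\<forall>a\<in>carrier G. a \<otimes> (y \<otimes> z) \<otimes> inv a \<in> H"
    proof
      fix a assume a: "a \<in> carrier G"
      have A: "a \<otimes> y \<otimes> inv a \<in> H" using y a unfolding N_def by blast
      have B: "a \<otimes> z \<otimes> inv a \<in> H" using z a unfolding N_def by blast
      have "(a \<otimes> y \<otimes> inv a) \<otimes> (a \<otimes> z \<otimes> inv a) \<in> H" using subgroup.m_closed[OF H A B] .
      moreover have "(a \<otimes> y \<otimes> inv a) \<otimes> (a \<otimes> z \<otimes> inv a) = a \<otimes> (y \<otimes> z) \<otimes> inv a"
        using a yG zG by (simp add: m_assoc)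
      ultimately show "a \<otimes> (y \<otimes> z) \<otimes> inv a \<in> H" by simp
    qed
    then show "y \<otimes> z \<in> N" unfolding N_def using yG zG by simp
  qed
  have Nn: "N \<lhd> G"
  proof (rule normal_invI[OF Ns])
    fix g y assume g: "g \<in> carrier G" and y: "y \<in> N"
    have yG: "y \<in> carrier G" using y NG by blast
    have "\<forall>a\<in>carrier G. a \<otimes> (g \<otimes> y \<otimes> inv g) \<otimes> inv a \<in> H"
    proof
      fix a assume a: "a \<in> carrier G"
      have "(a \<otimes> g) \<otimes> y \<otimes> inv (a \<otimes> g) \<in> H" using y a g unfolding N_def by blast
      moreover have "(a \<otimes> g) \<otimes> y \<otimes> inv (a \<otimes> g) = a \<otimes> (g \<otimes> y \<otimes> inv g) \<otimes> inv a"
        using a g yG by (simp add: m_assoc inv_mult_group)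
      ultimately show "a \<otimes> (g \<otimes> y \<otimes> inv g) \<otimes> inv a \<in> H" by simp
    qed
    then show "g \<otimes> y \<otimes> inv g \<in> N" unfolding N_def using g yG by simp
  qed
  have NH: "N \<subseteq> H"
  proof
    fix y assume y: "y \<in> N"
    then have "\<one> \<otimes> y \<otimes> inv \<one> \<in> H" unfolding N_def by blast
    then show "y \<in> H" using y NG by auto
  qed
  define \<psi> where "\<psi> = (\<lambda>g. \<lambda>C\<in>rcosets H. C #> g)"
  have \<psi>in: "\<psi> g \<in> (rcosets H \<rightarrow>\<^sub>E rcosets H)" if g: "g \<in> carrier G" for g
  proof -
    have "C #> g \<in> rcosets H" if C: "C \<in> rcosets H" for C
    proof -
      obtain b where b: "b \<in> carrier G" "C = H #> b" using C unfolding RCOSETS_def by blast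
      have "C #> g = H #> (b \<otimes> g)" using b g coset_mult_assoc[OF HG] by simp
      then show ?thesis unfolding RCOSETS_def using b g by blast
    qed
    then show ?thesis unfolding \<psi>_def by auto
  qed
  have \<psi>eq: "N #> g = N #> g'" if g: "g \<in> carrier G" and g': "g' \<in> carrier G" and e: "\<psi> g = \<psi> g'" for g g'
  proof -
    have "\<forall>a\<in>carrier G. a \<otimes> (g \<otimes> inv g') \<otimes> inv a \<in> H"
    proof
      fix a assume a: "a \<in> carrier G"
      have C: "H #> a \<in> rcosets H" unfolding RCOSETS_def using a by blast
      have "H #> a #> g = H #> a #> g'" using fun_cong[OF e, of "H #> a"] C unfolding \<psi>_def by simp
      then have "H #> (a \<otimes> g) = H #> (a \<otimes> g')" using coset_mult_assoc[OF HG] a g g' by simp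
      then have "(a \<otimes> g) \<otimes> inv (a \<otimes> g') \<in> H" using rcos_eq_iff[OF H] a g g' by simp
      moreover have "(a \<otimes> g) \<otimes> inv (a \<otimes> g') = a \<otimes> (g \<otimes> inv g') \<otimes> inv a"
        using a g g' by (simp add: m_assoc inv_mult_group)
      ultimately show "a \<otimes> (g \<otimes> inv g') \<otimes> inv a \<in> H" by simp
    qed
    then have "g \<otimes> inv g' \<in> N" unfolding N_def using g g' by simp
    then show ?thesis using rcos_eq_iff[OF Ns g g'] by simp
  qed
  have finF: "finite (\<psi> ` carrier G)"
  proof (rule finite_subset)
    show "\<psi> ` carrier G \<subseteq> (rcosets H \<rightarrow>\<^sub>E rcosets H)" using \<psi>in by blast
    show "finite (rcosets H \<rightarrow>\<^sub>E rcosets H)" using fH by (simp add: finite_PiE)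
  qed
  define sel where "sel = (\<lambda>f. SOME g. g \<in> carrier G \<and> \<psi> g = f)"
  have "rcosets N \<subseteq> (\<lambda>f. N #> sel f) ` (\<psi> ` carrier G)"
  proof
    fix C assume "C \<in> rcosets N"
    then obtain g where g: "g \<in> carrier G" "C = N #> g" unfolding RCOSETS_def by blast
    have "\<exists>g'. g' \<in> carrier G \<and> \<psi> g' = \<psi> g" using g by blast
    then have s: "sel (\<psi> g) \<in> carrier G \<and> \<psi> (sel (\<psi> g)) = \<psi> g"
      unfolding sel_def by (rule someI_ex)
    then have "N #> sel (\<psi> g) = N #> g" using \<psi>eq g by blast
    then show "C \<in> (\<lambda>f. N #> sel f) ` (\<psi> ` carrier G)" using g by blast
  qed
  then have "finite (rcosets N)" using finF finite_subset by blast
  then show ?thesis using Nn NH by blast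
qed

end

context normal begin

lemma img_subgroup:
  assumes Hs: "subgroup K G" and NK: "H \<subseteq> K"
  shows "subgroup ((\<lambda>h. H #> h) ` K) (G Mod H)"
proof -
  interpret Q: group "G Mod H" using factorgroup_is_group .
  have KG: "K \<subseteq> carrier G" using subgroup.subset[OF Hs] .
  show ?thesis
  proof (rule Q.subgroupI)
    show "(\<lambda>h. H #> h) ` K \<subseteq> carrier (G Mod H)" unfolding FactGroup_def RCOSETS_def using KG by auto
    show "(\<lambda>h. H #> h) ` K \<noteq> {}" using subgroup.one_closed[OF Hs] by blast
  next
    fix A assume "A \<in> (\<lambda>h. H #> h) ` K"
    then obtain h where h: "h \<in> K" "A = H #> h" by blast
    have hG: "h \<in> carrier G" using h KG by blast
    have "A \<in> carrier (G Mod H)" unfolding FactGroup_def RCOSETS_def using h hG by auto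
    then have "inv\<^bsub>G Mod H\<^esub> A = H #> inv h" using inv_FactGroup rcos_inv[OF hG] h by simp
    then show "inv\<^bsub>G Mod H\<^esub> A \<in> (\<lambda>h. H #> h) ` K" using subgroup.m_inv_closed[OF Hs h(1)] by simp
  next
    fix A B assume "A \<in> (\<lambda>h. H #> h) ` K" "B \<in> (\<lambda>h. H #> h) ` K"
    then obtain a b where a: "a \<in> K" "A = H #> a" and b: "b \<in> K" "B = H #> b" by blast
    have aG: "a \<in> carrier G" and bG: "b \<in> carrier G" using a b KG by auto
    have "A \<otimes>\<^bsub>G Mod H\<^esub> B = H #> (a \<otimes> b)" using a b rcos_sum[OF aG bG] by simp
    then show "A \<otimes>\<^bsub>G Mod H\<^esub> B \<in> (\<lambda>h. H #> h) ` K" using subgroup.m_closed[OF Hs a(1) b(1)] by simp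
  qed
qed

lemma img_mem:
  assumes Hs: "subgroup K G" and NK: "H \<subseteq> K" and y: "y \<in> carrier G"
    and m: "H #> y \<in> (\<lambda>h. H #> h) ` K"
  shows "y \<in> K"
proof -
  obtain h where h: "h \<in> K" "H #> y = H #> h" using m by blast
  have "y \<in> H #> y" using rcos_self[OF y is_subgroup] .
  then have "y \<in> H #> h" using h by simp
  then obtain n where n: "n \<in> H" "y = n \<otimes> h" unfolding r_coset_def by blast
  then show ?thesis using subgroup.m_closed[OF Hs _ h(1)] NK by blast
qed

lemma img_index:
  assumes Hs: "subgroup K G" and NK: "H \<subseteq> K"
  shows "bij_betw (\<lambda>C. (\<lambda>c. H #> c) ` C) (rcosets K) (rcosets\<^bsub>G Mod H\<^esub> ((\<lambda>h. H #> h) ` K))"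
proof -
  define \<Phi> where "\<Phi> = (\<lambda>C. (\<lambda>c. H #> c) ` C)"
  define KK where "KK = (\<lambda>h. H #> h) ` K"
  have KG: "K \<subseteq> carrier G" using subgroup.subset[OF Hs] .
  have img: "\<Phi> (K #> g) = KK #>\<^bsub>G Mod H\<^esub> (H #> g)" if g: "g \<in> carrier G" for g
  proof -
    have "\<Phi> (K #> g) = (\<lambda>h. H #> (h \<otimes> g)) ` K" unfolding \<Phi>_def r_coset_def by auto
    also have "\<dots> = (\<lambda>A. A <#> (H #> g)) ` KK"
      unfolding KK_def image_image using rcos_sum g KG by (auto intro!: image_cong)
    also have "\<dots> = KK #>\<^bsub>G Mod H\<^esub> (H #> g)" unfolding r_coset_def FactGroup_def by auto
    finally show ?thesis .
  qed
  have inv: "\<Union> (\<Phi> C) = C" if C: "C \<in> rcosets K" for C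
  proof -
    obtain g where g: "g \<in> carrier G" "C = K #> g" using C unfolding RCOSETS_def by blast
    have CG: "C \<subseteq> carrier G" using g r_coset_subset_G[OF KG] by blast
    show ?thesis
    proof
      show "\<Union> (\<Phi> C) \<subseteq> C"
      proof
        fix y assume "y \<in> \<Union> (\<Phi> C)"
        then obtain c where c: "c \<in> C" "y \<in> H #> c" unfolding \<Phi>_def by blast
        obtain k where k: "k \<in> K" "c = k \<otimes> g" using c(1) g unfolding r_coset_def by blast
        obtain n where n: "n \<in> H" "y = n \<otimes> c" using c(2) unfolding r_coset_def by blast
        have nG: "n \<in> carrier G" and kG: "k \<in> carrier G" using n k NK KG by auto
        have "y = (n \<otimes> k) \<otimes> g" using n k nG kG g by (simp add: m_assoc)
        moreover have "n \<otimes> k \<in> K" using subgroup.m_closed[OF Hs _ k(1)] n NK by blast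
        ultimately show "y \<in> C" using g unfolding r_coset_def by blast
      qed
      show "C \<subseteq> \<Union> (\<Phi> C)"
      proof
        fix c assume c: "c \<in> C"
        have "c \<in> H #> c" using rcos_self[OF _ is_subgroup] c CG by blast
        then show "c \<in> \<Union> (\<Phi> C)" unfolding \<Phi>_def using c by blast
      qed
    qed
  qed
  have "inj_on \<Phi> (rcosets K)"
    by (rule inj_onI) (metis inv)
  moreover have "\<Phi> ` (rcosets K) = rcosets\<^bsub>G Mod H\<^esub> KK"
  proof
    show "\<Phi> ` (rcosets K) \<subseteq> rcosets\<^bsub>G Mod H\<^esub> KK"
    proof
      fix D assume "D \<in> \<Phi> ` (rcosets K)"
      then obtain g where g: "g \<in> carrier G" "D = \<Phi> (K #> g)" unfolding RCOSETS_def by blast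
      have "H #> g \<in> carrier (G Mod H)" unfolding FactGroup_def RCOSETS_def using g by auto
      then show "D \<in> rcosets\<^bsub>G Mod H\<^esub> KK" unfolding RCOSETS_def using img g by auto
    qed
    show "rcosets\<^bsub>G Mod H\<^esub> KK \<subseteq> \<Phi> ` (rcosets K)"
    proof
      fix D assume "D \<in> rcosets\<^bsub>G Mod H\<^esub> KK"
      then obtain A where A: "A \<in> carrier (G Mod H)" "D = KK #>\<^bsub>G Mod H\<^esub> A" unfolding RCOSETS_def by blast
      then obtain g where g: "g \<in> carrier G" "A = H #> g" unfolding FactGroup_def RCOSETS_def by auto
      have "K #> g \<in> rcosets K" unfolding RCOSETS_def using g by blast
      then show "D \<in> \<Phi> ` (rcosets K)" using img g A by auto
    qed
  qed
  ultimately show ?thesis unfolding bij_betw_def \<Phi>_def KK_def by simp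
qed

end


context group begin

lemma main_thm:
  shows "S_set G = \<Inter>{fitting_rel G N | N. N \<lhd> G \<and> finite (rcosets N)}"
proof -
  have finQ: "S_set (G Mod N) = fitting (G Mod N)" if N: "N \<lhd> G" "finite (rcosets N)" for N
  proof -
    interpret N: normal N G using N(1) .
    interpret Q: group "G Mod N" using N.factorgroup_is_group .
    show ?thesis using Q.finite_S_fitting N(2) unfolding FactGroup_def by simp
  qed
  show ?thesis
  proof
    show "S_set G \<subseteq> \<Inter>{fitting_rel G N | N. N \<lhd> G \<and> finite (rcosets N)}"
    proof
      fix x assume xS: "x \<in> S_set G"
      have x: "x \<in> carrier G" using xS unfolding S_set_def by blast
      have xH: "\<And>H. subgroup H G \<Longrightarrow> finite (rcosets H) \<Longrightarrow> x [^] card (rcosets H) \<in> H"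
        using xS unfolding S_set_def by blast
      show "x \<in> \<Inter>{fitting_rel G N | N. N \<lhd> G \<and> finite (rcosets N)}"
      proof (rule InterI)
        fix F assume "F \<in> {fitting_rel G N | N. N \<lhd> G \<and> finite (rcosets N)}"
        then obtain N where F: "F = fitting_rel G N" and N: "N \<lhd> G" "finite (rcosets N)" by blast
        interpret N: normal N G using N(1) .
        interpret Q: group "G Mod N" using N.factorgroup_is_group .
        have "N #> x \<in> S_set (G Mod N)" unfolding S_set_def
        proof (intro CollectI conjI allI impI)
          show "N #> x \<in> carrier (G Mod N)" unfolding FactGroup_def RCOSETS_def using x by auto
          fix A assume A: "subgroup A (G Mod N) \<and> finite (rcosets\<^bsub>G Mod N\<^esub> A)"
          define K where "K = \<Union>A"
          have Ks: "subgroup K G" unfolding K_def using N.factgroup_subgroup_union_subgroup A by blast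
          have "\<one>\<^bsub>G Mod N\<^esub> \<in> A" using subgroup.one_closed A by blast
          then have NK: "N \<subseteq> K" unfolding K_def by auto
          have "A = rcosets\<^bsub>G\<lparr>carrier := K\<rparr>\<^esub> N"
            using N.factgroup_subgroup_union_factor A unfolding K_def by blast
          also have "\<dots> = (\<lambda>h. N #> h) ` K" unfolding RCOSETS_def by auto
          finally have AK: "A = (\<lambda>h. N #> h) ` K" .
          have bij: "bij_betw (\<lambda>C. (\<lambda>c. N #> c) ` C) (rcosets K) (rcosets\<^bsub>G Mod N\<^esub> A)"
            using N.img_index[OF Ks NK] AK by simp
          have cK: "card (rcosets K) = card (rcosets\<^bsub>G Mod N\<^esub> A)" using bij_betw_same_card[OF bij] .
          have fK: "finite (rcosets K)" using bij_betw_finite[OF bij] A by blast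
          have xn: "x [^] card (rcosets K) \<in> K" using xH[OF Ks fK] .
          have "(N #> x) [^]\<^bsub>G Mod N\<^esub> card (rcosets\<^bsub>G Mod N\<^esub> A) = N #> (x [^] card (rcosets K))"
            using N.FactGroup_pow[OF x] cK by simp
          then show "(N #> x) [^]\<^bsub>G Mod N\<^esub> card (rcosets\<^bsub>G Mod N\<^esub> A) \<in> A" using AK xn by simp
        qed
        then have "N #> x \<in> fitting (G Mod N)" using finQ[OF N] by simp
        then show "x \<in> F" unfolding F fitting_rel_def using x by simp
      qed
    qed
  next
    show "\<Inter>{fitting_rel G N | N. N \<lhd> G \<and> finite (rcosets N)} \<subseteq> S_set G"
    proof
      fix x assume xI: "x \<in> \<Inter>{fitting_rel G N | N. N \<lhd> G \<and> finite (rcosets N)}"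
      have mem: "N #> x \<in> fitting (G Mod N)" if "N \<lhd> G" "finite (rcosets N)" for N
        using xI that unfolding fitting_rel_def by blast
      have fc: "finite (rcosets (carrier G))"
      proof -
        have "rcosets (carrier G) \<subseteq> {carrier G}"
          unfolding RCOSETS_def using subgroup.rcos_const[OF subgroup_self is_group] by auto
        then show ?thesis using finite_subset by blast
      qed
      have x: "x \<in> carrier G" using xI normal_self fc unfolding fitting_rel_def by blast
      have "x [^] card (rcosets H) \<in> H" if H: "subgroup H G" "finite (rcosets H)" for H
      proof -
        obtain N where N: "N \<lhd> G" "N \<subseteq> H" "finite (rcosets N)" using core_exists[OF H] by blast
        interpret N: normal N G using N(1) .
        interpret Q: group "G Mod N" using N.factorgroup_is_group .
        have xQ: "N #> x \<in> S_set (G Mod N)" using mem[OF N(1,3)] finQ[OF N(1,3)] by simp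
        have Hs: "subgroup ((\<lambda>h. N #> h) ` H) (G Mod N)" using N.img_subgroup[OF H(1) N(2)] .
        have bij: "bij_betw (\<lambda>C. (\<lambda>c. N #> c) ` C) (rcosets H) (rcosets\<^bsub>G Mod N\<^esub> ((\<lambda>h. N #> h) ` H))"
          using N.img_index[OF H(1) N(2)] .
        have cH: "card (rcosets H) = card (rcosets\<^bsub>G Mod N\<^esub> ((\<lambda>h. N #> h) ` H))" using bij_betw_same_card[OF bij] .
        have fH: "finite (rcosets\<^bsub>G Mod N\<^esub> ((\<lambda>h. N #> h) ` H))" using bij_betw_finite[OF bij] H(2) by blast
        have "(N #> x) [^]\<^bsub>G Mod N\<^esub> card (rcosets\<^bsub>G Mod N\<^esub> ((\<lambda>h. N #> h) ` H)) \<in> (\<lambda>h. N #> h) ` H"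
          using xQ Hs fH unfolding S_set_def by blast
        then have "N #> (x [^] card (rcosets H)) \<in> (\<lambda>h. N #> h) ` H"
          using N.FactGroup_pow[OF x] cH by simp
        then show ?thesis using N.img_mem[OF H(1) N(2)] x by simp
      qed
      then show "x \<in> S_set G" unfolding S_set_def using x by blast
    qed
  qed
qed

end

theorem theorem1p5:
  assumes "group G"
  shows "S_set G = \<Inter>{fitting_rel G N | N. normal N G \<and> finite (rcosets\<^bsub>G\<^esub> N)}"
  using group.main_thm[OF assms] .


end
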